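(* Let $1\le a\le b\le c$ be integers with $a<c$, $K=K_{a,b,c}$ and $k=a+b+c$. Let $K_1,K_2$ be vertex-disjoint copies of $K$ and $u$ a vertex not in $V(K_1)\cup V(K_2)$. Then for every $3$-graph $L\in\mathcal L_2(K_1,K_2,u)$ there exists a fractional hom$(K)$-tiling $h$ of $L$ with $w(h)\ge 2k+\frac1{abc^2}$ and $h_{\min}\ge\frac1{bc^2}$.
   Context: $K_{a,b,c}$ is the complete $3$-partite $3$-graph with parts of sizes $a,b,c$. $\mathcal L_2(K_1,K_2,u)$ is the family of all $3$-graphs on vertex set $\{u\}\cup V(K_1)\cup V(K_2)$ whose edge set contains $E(K_1)\cup E(K_2)$ and at least $\max\{a^2+2a(b+c),(a+b)^2\}+1$ triples $uvw$ with $v\in V(K_1)$ and $w\in V(K_2)$. For a $3$-graph $G=(V,E)$, a function $h:V\times E\to[0,1]$ is a fractional hom$(K)$-tiling of $G$ if (1) $h(v,e)=0$ whenever $v\notin e$; (2) $\sum_{e\in E}h(v,e)\le1$ for all $v\in V$; (3) every $e\in E$ has a labeling $e=xyz$ with $h(x,e)\le h(y,e)\le h(z,e)$ and $\frac{h(x,e)}a\ge\frac{h(y,e)}b\ge\frac{h(z,e)}c$. $h_{\min}$ is the smallest nonzero value of $h(v,e)$ and $w(h)=\sum_{(v,e)\in V\times E}h(v,e)$. *)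

theory Defs
  imports Main "HOL.Real"
begin

text \<open>3-graphs are given by a vertex set V and an edge set E of 3-element subsets of V.\<close>

definition complete3partite :: "'v set \<Rightarrow> 'v set \<Rightarrow> 'v set \<Rightarrow> 'v set set" where
  "complete3partite A B C = {{x, y, z} | x y z. x \<in> A \<and> y \<in> B \<and> z \<in> C}"

definition is_copy_K :: "nat \<Rightarrow> nat \<Rightarrow> nat \<Rightarrow> 'v set \<Rightarrow> 'v set set \<Rightarrow> bool" where
  "is_copy_K a b c V E \<longleftrightarrow>
     (\<exists>A B C. finite A \<and> finite B \<and> finite C \<and>
        card A = a \<and> card B = b \<and> card C = c \<and>
        A \<inter> B = {} \<and> A \<inter> C = {} \<and> B \<inter> C = {} \<and>
        V = A \<union> B \<union> C \<and> E = complete3partite A B C)"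

definition in_L2 :: "nat \<Rightarrow> nat \<Rightarrow> nat \<Rightarrow> 'v set \<Rightarrow> 'v set set \<Rightarrow> 'v set \<Rightarrow> 'v set set \<Rightarrow> 'v
                     \<Rightarrow> 'v set set \<Rightarrow> bool" where
  "in_L2 a b c V1 E1 V2 E2 u E \<longleftrightarrow>
     E \<subseteq> {e. e \<subseteq> insert u (V1 \<union> V2) \<and> card e = 3} \<and>
     E1 \<union> E2 \<subseteq> E \<and>
     card {e \<in> E. \<exists>v\<in>V1. \<exists>w\<in>V2. e = {u, v, w}}
       \<ge> max (a^2 + 2*a*(b+c)) ((a+b)^2) + 1"

definition frac_hom_tiling :: "nat \<Rightarrow> nat \<Rightarrow> nat \<Rightarrow> 'v set \<Rightarrow> 'v set set \<Rightarrow> ('v \<Rightarrow> 'v set \<Rightarrow> real) \<Rightarrow> bool" where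
  "frac_hom_tiling a b c V E h \<longleftrightarrow>
     (\<forall>v\<in>V. \<forall>e\<in>E. 0 \<le> h v e \<and> h v e \<le> 1) \<and>
     (\<forall>v\<in>V. \<forall>e\<in>E. v \<notin> e \<longrightarrow> h v e = 0) \<and>
     (\<forall>v\<in>V. (\<Sum>e\<in>E. h v e) \<le> 1) \<and>
     (\<forall>e\<in>E. \<exists>x y z. e = {x, y, z} \<and> x \<noteq> y \<and> x \<noteq> z \<and> y \<noteq> z \<and>
        h x e \<le> h y e \<and> h y e \<le> h z e \<and>
        h x e / real a \<ge> h y e / real b \<and> h y e / real b \<ge> h z e / real c)"

definition tiling_weight :: "'v set \<Rightarrow> 'v set set \<Rightarrow> ('v \<Rightarrow> 'v set \<Rightarrow> real) \<Rightarrow> real" where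
  "tiling_weight V E h = (\<Sum>v\<in>V. \<Sum>e\<in>E. h v e)"

definition tiling_hmin :: "'v set \<Rightarrow> 'v set set \<Rightarrow> ('v \<Rightarrow> 'v set \<Rightarrow> real) \<Rightarrow> real" where
  "tiling_hmin V E h = Min {h v e | v e. v \<in> V \<and> e \<in> E \<and> h v e \<noteq> 0}"

end

theory Submission
  imports Defs
begin


definition ok3 :: "nat \<Rightarrow> nat \<Rightarrow> nat \<Rightarrow> real \<Rightarrow> real \<Rightarrow> real \<Rightarrow> bool" where
  "ok3 a b c x y z \<longleftrightarrow> x \<le> y \<and> y \<le> z \<and> y / real b \<le> x / real a \<and> z / real c \<le> y / real b"

definition tri_ok :: "nat \<Rightarrow> nat \<Rightarrow> nat \<Rightarrow> real \<Rightarrow> real \<Rightarrow> real \<Rightarrow> bool" where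
  "tri_ok a b c p q r \<longleftrightarrow> ok3 a b c p q r \<or> ok3 a b c p r q \<or> ok3 a b c q p r \<or>
      ok3 a b c q r p \<or> ok3 a b c r p q \<or> ok3 a b c r q p"

lemma tri_label:
  assumes "tri_ok a b c (f x) (f y) (f z)" "x\<noteq>y" "x\<noteq>z" "y\<noteq>z"
  shows "\<exists>x' y' z'. {x,y,z} = {x',y',z'} \<and> x'\<noteq>y' \<and> x'\<noteq>z' \<and> y'\<noteq>z' \<and>
     f x' \<le> f y' \<and> f y' \<le> f z' \<and> f x' / real a \<ge> f y' / real b \<and> f y' / real b \<ge> f z' / real c"
proof -
  have "ok3 a b c (f x) (f y) (f z) \<or> ok3 a b c (f x) (f z) (f y) \<or> ok3 a b c (f y) (f x) (f z) \<or>
      ok3 a b c (f y) (f z) (f x) \<or> ok3 a b c (f z) (f x) (f y) \<or> ok3 a b c (f z) (f y) (f x)"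
    using assms(1) unfolding tri_ok_def .
  then show ?thesis
  proof (elim disjE)
    assume "ok3 a b c (f x) (f y) (f z)" then show ?thesis using assms unfolding ok3_def
      by (intro exI[of _ x] exI[of _ y] exI[of _ z]) auto
  next
    assume "ok3 a b c (f x) (f z) (f y)" then show ?thesis using assms unfolding ok3_def
      by (intro exI[of _ x] exI[of _ z] exI[of _ y]) (auto simp: insert_commute)
  next
    assume "ok3 a b c (f y) (f x) (f z)" then show ?thesis using assms unfolding ok3_def
      by (intro exI[of _ y] exI[of _ x] exI[of _ z]) (auto simp: insert_commute)
  next
    assume "ok3 a b c (f y) (f z) (f x)" then show ?thesis using assms unfolding ok3_def
      by (intro exI[of _ y] exI[of _ z] exI[of _ x]) (auto simp: insert_commute)
  next
    assume "ok3 a b c (f z) (f x) (f y)" then show ?thesis using assms unfolding ok3_def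
      by (intro exI[of _ z] exI[of _ x] exI[of _ y]) (auto simp: insert_commute)
  next
    assume "ok3 a b c (f z) (f y) (f x)" then show ?thesis using assms unfolding ok3_def
      by (intro exI[of _ z] exI[of _ y] exI[of _ x]) (auto simp: insert_commute)
  qed
qed

definition sv :: "nat \<Rightarrow> nat \<Rightarrow> nat \<Rightarrow> real" where
  "sv a b c = 1 / (real a * real b * real c)"

definition stdv :: "nat \<Rightarrow> nat \<Rightarrow> nat \<Rightarrow> 'v set \<Rightarrow> 'v set \<Rightarrow> 'v \<Rightarrow> real" where
  "stdv a b c A B v = (if v \<in> A then real a * sv a b c else if v \<in> B then real b * sv a b c else real c * sv a b c)"

definition GOAL :: "nat \<Rightarrow> nat \<Rightarrow> nat \<Rightarrow> 'v set \<Rightarrow> 'v set set \<Rightarrow> bool" where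
  "GOAL a b c V E \<longleftrightarrow> (\<exists>h. frac_hom_tiling a b c V E h \<and>
             tiling_weight V E h \<ge> 2 * real (a + b + c) + 1 / (real a * real b * real c ^ 2) \<and>
             tiling_hmin V E h \<ge> 1 / (real b * real c ^ 2))"

lemma card_edges_containing:
  assumes fin: "finite A" "finite B" "finite C" and d: "A \<inter> B = {}" "A \<inter> C = {}" "B \<inter> C = {}"
    and v: "v \<in> A"
  shows "card {e \<in> complete3partite A B C. v \<in> e} = card B * card C"
proof -
  have eq: "{e \<in> complete3partite A B C. v \<in> e} = (\<lambda>(y,z). {v,y,z}) ` (B \<times> C)"
  proof
    show "{e \<in> complete3partite A B C. v \<in> e} \<subseteq> (\<lambda>(y,z). {v,y,z}) ` (B \<times> C)"
    proof
      fix e assume "e \<in> {e \<in> complete3partite A B C. v \<in> e}"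
      then obtain x y z where e: "e = {x,y,z}" "x \<in> A" "y \<in> B" "z \<in> C" "v \<in> e"
        unfolding complete3partite_def by blast
      then have "v = x" using d v by auto
      then show "e \<in> (\<lambda>(y,z). {v,y,z}) ` (B \<times> C)" using e by auto
    qed
    show "(\<lambda>(y,z). {v,y,z}) ` (B \<times> C) \<subseteq> {e \<in> complete3partite A B C. v \<in> e}"
      using v unfolding complete3partite_def by auto
  qed
  have inj: "inj_on (\<lambda>(y,z). {v,y,z}) (B \<times> C)"
  proof (rule inj_onI, clarsimp)
    fix y z y' z' assume h: "y \<in> B" "z \<in> C" "y' \<in> B" "z' \<in> C" "{v, y, z} = {v, y', z'}"
    have "v \<notin> B" "v \<notin> C" using v d by auto
    then show "y = y' \<and> z = z'" using h d by (auto simp: doubleton_eq_iff insert_eq_iff)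
  qed
  show ?thesis unfolding eq using card_image[OF inj] fin by (simp add: card_cartesian_product)
qed

lemma c3p_swap12: "complete3partite A B C = complete3partite B A C"
  unfolding complete3partite_def by (auto simp: insert_commute)

lemma c3p_swap23: "complete3partite A B C = complete3partite A C B"
  unfolding complete3partite_def by (auto simp: insert_commute)

lemma c3p_sub: "e \<in> complete3partite A B C \<Longrightarrow> e \<subseteq> A \<union> B \<union> C \<and> e \<noteq> {}"
  unfolding complete3partite_def by auto

lemma c3p_mem: "e \<in> complete3partite A B C \<Longrightarrow> \<exists>x y z. e = {x,y,z} \<and> x \<in> A \<and> y \<in> B \<and> z \<in> C"
  unfolding complete3partite_def by auto

lemma triple_inj:
  assumes "{u, v, w} = {u, v', w'}" "v \<in> X" "v' \<in> X" "w \<in> Y" "w' \<in> Y" "X \<inter> Y = {}" "u \<notin> X" "u \<notin> Y"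
  shows "v = v' \<and> w = w'"
proof -
  have "v \<in> {u, v', w'}" using assms(1) by auto
  then have 1: "v = v'" using assms by auto
  have "w \<in> {u, v', w'}" using assms(1) by auto
  then have "w = w'" using assms by auto
  with 1 show ?thesis by simp
qed




locale L2s =
  fixes a b c :: nat and A1 B1 C1 A2 B2 C2 :: "'v set" and u :: 'v and E :: "'v set set"
  assumes fin: "finite A1" "finite B1" "finite C1" "finite A2" "finite B2" "finite C2"
  and cards: "card A1 = a" "card B1 = b" "card C1 = c" "card A2 = a" "card B2 = b" "card C2 = c"
  and dj1: "A1 \<inter> B1 = {}" "A1 \<inter> C1 = {}" "B1 \<inter> C1 = {}"
  and dj2: "A2 \<inter> B2 = {}" "A2 \<inter> C2 = {}" "B2 \<inter> C2 = {}"
  and dj12: "(A1 \<union> B1 \<union> C1) \<inter> (A2 \<union> B2 \<union> C2) = {}"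
  and un: "u \<notin> A1 \<union> B1 \<union> C1" "u \<notin> A2 \<union> B2 \<union> C2"
  and abc: "1 \<le> a" "a \<le> b" "b \<le> c" "a < c"
  and Esub: "E \<subseteq> {e. e \<subseteq> insert u ((A1 \<union> B1 \<union> C1) \<union> (A2 \<union> B2 \<union> C2)) \<and> card e = 3}"
  and E12: "complete3partite A1 B1 C1 \<subseteq> E" "complete3partite A2 B2 C2 \<subseteq> E"
begin

abbreviation "V1 \<equiv> A1 \<union> B1 \<union> C1"
abbreviation "V2 \<equiv> A2 \<union> B2 \<union> C2"
abbreviation "E1 \<equiv> complete3partite A1 B1 C1"
abbreviation "E2 \<equiv> complete3partite A2 B2 C2"
abbreviation "s \<equiv> sv a b c"
abbreviation "std \<equiv> stdv a b c (A1 \<union> A2) (B1 \<union> B2)"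
abbreviation "mm \<equiv> real a * sv a b c / real c"

lemma swap: "L2s a b c A2 B2 C2 A1 B1 C1 u E"
  using fin cards dj1 dj2 dj12 un abc Esub E12 by unfold_locales auto

lemma finV1: "finite V1" and finV2: "finite V2" using fin by auto

lemma finE: "finite E"
proof -
  have "E \<subseteq> Pow (insert u (V1 \<union> V2))" using Esub by auto
  then show ?thesis using finV1 finV2 finite_subset by blast
qed

lemma cardV1: "card V1 = a + b + c"
  using fin cards dj1 by (simp add: card_Un_disjoint Int_Un_distrib2)
lemma cardV2: "card V2 = a + b + c"
  using fin cards dj2 by (simp add: card_Un_disjoint Int_Un_distrib2)

lemma apos: "real a > 0" and bpos: "real b > 0" and cpos: "real c > 0"
  using abc by auto

lemma s_pos: "s > 0" unfolding sv_def using abc by auto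

lemma std_bounds: "mm \<le> std v" "std v \<le> 1" "0 < mm"
proof -
  have s: "s = 1 / (real a * real b * real c)" by (simp add: sv_def)
  have a1: "real a \<ge> 1" and ab: "real a \<le> real b" and bc: "real b \<le> real c" using abc by auto
  have "real a * s = 1 / (real b * real c)" using apos unfolding s by (simp add: field_simps)
  moreover have "real b * s = 1 / (real a * real c)" using bpos unfolding s by (simp add: field_simps)
  moreover have "real c * s = 1 / (real a * real b)" using cpos unfolding s by (simp add: field_simps)
  moreover have "mm = 1 / (real b * real c * real c)" using apos cpos unfolding s by (simp add: field_simps)
  ultimately have e: "real a * s = 1 / (real b * real c)" "real b * s = 1 / (real a * real c)"
     "real c * s = 1 / (real a * real b)" "mm = 1 / (real b * real c * real c)" by auto
  have b1: "real b \<ge> 1" and c1: "real c \<ge> 1" using a1 ab bc by auto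
  have "1 * 1 \<le> real b * real c" "1 * 1 \<le> real a * real c" "1 * 1 \<le> real a * real b"
    using a1 b1 c1 by (intro mult_mono; simp)+
  then have "real b * real c \<ge> 1" "real a * real c \<ge> 1" "real a * real b \<ge> 1" by auto
  then have u1: "real a * s \<le> 1" "real b * s \<le> 1" "real c * s \<le> 1" using e by auto
  have "real a * s \<le> real b * s" "real a * s \<le> real c * s" using ab bc s_pos by auto
  moreover have "mm \<le> real a * s" using s_pos apos a1 ab bc
    by (simp add: divide_le_eq)
  ultimately show "mm \<le> std v" "std v \<le> 1" using u1 by (auto simp: stdv_def)
  show "0 < mm" using apos cpos s_pos by simp
qed

lemma V1_not_V2: "x \<in> V1 \<Longrightarrow> x \<notin> V2" using dj12 by blast
lemma V1_not_u: "x \<in> V1 \<Longrightarrow> x \<noteq> u" using un by blast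
lemma V2_not_u: "x \<in> V2 \<Longrightarrow> x \<noteq> u" using un by blast

lemma E1V: "e \<in> E1 \<Longrightarrow> e \<subseteq> V1 \<and> e \<noteq> {}" using c3p_sub by blast
lemma E2V: "e \<in> E2 \<Longrightarrow> e \<subseteq> V2 \<and> e \<noteq> {}" using c3p_sub by blast
lemma E12d: "e \<in> E1 \<Longrightarrow> e \<notin> E2" using E1V E2V dj12 by blast
lemma uE1: "e \<in> E1 \<Longrightarrow> u \<notin> e" using E1V un by blast
lemma uE2: "e \<in> E2 \<Longrightarrow> u \<notin> e" using E2V un by blast
lemma finE1: "finite E1" using finE E12 finite_subset by blast
lemma finE2: "finite E2" using finE E12 finite_subset by blast

lemma std_A: "v \<in> A1 \<union> A2 \<Longrightarrow> std v = real a * s" by (simp add: stdv_def)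
lemma std_B: "v \<in> B1 \<union> B2 \<Longrightarrow> std v = real b * s"
  using dj1 dj2 dj12 by (auto simp: stdv_def)
lemma std_C: "v \<in> C1 \<union> C2 \<Longrightarrow> std v = real c * s"
  using dj1 dj2 dj12 by (auto simp: stdv_def)

lemma abcs: "real a * real b * real c * s = 1"
  using apos bpos cpos by (simp add: sv_def)

lemma deg_gen:
  assumes "finite A" "finite B" "finite C" "A \<inter> B = {}" "A \<inter> C = {}" "B \<inter> C = {}"
    "card A = a" "card B = b" "card C = c"
    and sA: "\<forall>v\<in>A. std v = real a * s" and sB: "\<forall>v\<in>B. std v = real b * s"
    and sC: "\<forall>v\<in>C. std v = real c * s"
    and fE: "finite (complete3partite A B C)" and v: "v \<in> A \<union> B \<union> C"
  shows "(\<Sum>e\<in>complete3partite A B C. if v \<in> e then std v else 0) = 1"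
proof -
  have "(\<Sum>e\<in>complete3partite A B C. if v \<in> e then std v else 0)
      = (\<Sum>e\<in>{e\<in>complete3partite A B C. v \<in> e}. std v)"
    by (rule sum.inter_filter[symmetric, OF fE])
  also have "\<dots> = real (card {e\<in>complete3partite A B C. v \<in> e}) * std v" by simp
  also have "\<dots> = 1"
  proof -
    consider "v \<in> A" | "v \<in> B" | "v \<in> C" using v by blast
    then show ?thesis
    proof cases
      case 1
      have "card {e\<in>complete3partite A B C. v \<in> e} = b * c"
        using card_edges_containing[of A B C v] assms 1 by simp
      then show ?thesis using 1 sA abcs by (simp add: algebra_simps)
    next
      case 2
      have "card {e\<in>complete3partite B A C. v \<in> e} = a * c"
        using card_edges_containing[of B A C v] assms 2 by (simp add: Int_commute)
      then show ?thesis using 2 sB abcs by (simp add: algebra_simps c3p_swap12[of A B C])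
    next
      case 3
      have "card {e\<in>complete3partite C A B. v \<in> e} = a * b"
        using card_edges_containing[of C A B v] assms 3 by (simp add: Int_commute)
      moreover have "complete3partite A B C = complete3partite C A B"
        by (metis c3p_swap12 c3p_swap23)
      ultimately show ?thesis using 3 sC abcs by (simp add: algebra_simps)
    qed
  qed
  finally show ?thesis .
qed

lemma deg1: "v \<in> V1 \<Longrightarrow> (\<Sum>e\<in>E1. if v \<in> e then std v else 0) = 1"
  by (rule deg_gen) (use fin cards dj1 std_A std_B std_C finE1 in auto)
lemma deg2: "v \<in> V2 \<Longrightarrow> (\<Sum>e\<in>E2. if v \<in> e then std v else 0) = 1"
  by (rule deg_gen) (use fin cards dj2 std_A std_B std_C finE2 in auto)

lemma zero_label: "e \<in> E \<Longrightarrow> \<exists>x y z. e = {x,y,z} \<and> x \<noteq> y \<and> x \<noteq> z \<and> y \<noteq> z"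
proof -
  assume "e \<in> E"
  then have "card e = 3" using Esub by auto
  then show ?thesis by (metis card_3_iff)
qed

lemma std_ok3: "x \<in> A1 \<union> A2 \<Longrightarrow> y \<in> B1 \<union> B2 \<Longrightarrow> z \<in> C1 \<union> C2 \<Longrightarrow>
   std x \<le> std y \<and> std y \<le> std z \<and> std x / real a \<ge> std y / real b \<and> std y / real b \<ge> std z / real c"
  using std_A std_B std_C abc s_pos apos bpos cpos by (auto intro: mult_right_mono)

lemma generic:
  fixes MA MB :: "'v set set" and dA dB :: "'v set \<Rightarrow> 'v \<Rightarrow> real"
    and Q :: "('v \<times> 'v) set" and PU PV PW :: "'v \<times> 'v \<Rightarrow> real"
  assumes M: "MA \<subseteq> E1" "MB \<subseteq> E2"
    and Qf: "finite Q" and QV: "Q \<subseteq> V1 \<times> V2" and QE: "\<forall>q\<in>Q. {u, fst q, snd q} \<in> E"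
    and adm1: "\<forall>e\<in>MA. \<forall>x\<in>A1. \<forall>y\<in>B1. \<forall>z\<in>C1. e = {x,y,z} \<longrightarrow>
        tri_ok a b c (std x - dA e x) (std y - dA e y) (std z - dA e z)"
    and adm2: "\<forall>e\<in>MB. \<forall>x\<in>A2. \<forall>y\<in>B2. \<forall>z\<in>C2. e = {x,y,z} \<longrightarrow>
        tri_ok a b c (std x - dB e x) (std y - dB e y) (std z - dB e z)"
    and val1: "\<forall>e\<in>MA. \<forall>v\<in>e. 0 \<le> dA e v \<and> mm \<le> std v - dA e v"
    and val2: "\<forall>e\<in>MB. \<forall>v\<in>e. 0 \<le> dB e v \<and> mm \<le> std v - dB e v"
    and cv: "\<forall>q\<in>Q. mm \<le> PU q \<and> PU q \<le> 1 \<and> mm \<le> PV q \<and> PV q \<le> 1 \<and> mm \<le> PW q \<and> PW q \<le> 1 \<and>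
        tri_ok a b c (PU q) (PV q) (PW q)"
    and load1: "\<forall>v\<in>V1. (\<Sum>q\<in>Q. if fst q = v then PV q else 0) \<le> (\<Sum>e\<in>MA. if v \<in> e then dA e v else 0)"
    and load2: "\<forall>w\<in>V2. (\<Sum>q\<in>Q. if snd q = w then PW q else 0) \<le> (\<Sum>e\<in>MB. if w \<in> e then dB e w else 0)"
    and loadu: "(\<Sum>q\<in>Q. PU q) \<le> 1"
    and gain: "(\<Sum>q\<in>Q. PU q + PV q + PW q) - (\<Sum>e\<in>MA. \<Sum>v\<in>e. dA e v) - (\<Sum>e\<in>MB. \<Sum>v\<in>e. dB e v)
        \<ge> s / real c"
  shows "GOAL a b c (insert u (V1 \<union> V2)) E"
proof -
  define CE where "CE = (\<lambda>q. {u, fst q, snd q}) ` Q"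
  define pr where "pr e = (THE q. q \<in> Q \<and> e = {u, fst q, snd q})" for e
  define D where "D e v = (if e \<in> MA then dA e v else if e \<in> MB then dB e v else 0)" for e v
  define h where "h v e = (if e \<in> E1 \<or> e \<in> E2 then (if v \<in> e then std v - D e v else 0)
     else if e \<in> CE then (if v = u then PU (pr e) else if v = fst (pr e) then PV (pr e)
       else if v = snd (pr e) then PW (pr e) else 0) else 0)" for v e
  have qinj: "q = q'" if "q \<in> Q" "q' \<in> Q" "{u, fst q, snd q} = {u, fst q', snd q'}" for q q'
  proof -
    have "fst q = fst q' \<and> snd q = snd q'"
      by (rule triple_inj[where X=V1 and Y=V2]) (use that QV dj12 un in auto)
    then show ?thesis by (simp add: prod_eq_iff)
  qed
  have prq: "pr {u, fst q, snd q} = q" if "q \<in> Q" for q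
    unfolding pr_def by (rule the_equality) (use that qinj in auto)
  have CEsub: "CE \<subseteq> E" using QE unfolding CE_def by auto
  have finCE: "finite CE" unfolding CE_def using Qf by simp
  have injCE: "inj_on (\<lambda>q. {u, fst q, snd q}) Q" by (rule inj_onI) (rule qinj)
  have CEn: "e \<notin> E1 \<and> e \<notin> E2" if "e \<in> CE" for e
    using that uE1 uE2 unfolding CE_def by auto
  have hE1: "h v e = (if v \<in> e then std v - (if e \<in> MA then dA e v else 0) else 0)" if "e \<in> E1" for v e
    using that M E12d unfolding h_def D_def by auto
  have hE2: "h v e = (if v \<in> e then std v - (if e \<in> MB then dB e v else 0) else 0)" if "e \<in> E2" for v e
    using that M E12d unfolding h_def D_def by auto
  have hCE: "h v {u, fst q, snd q} = (if v = u then PU q else if v = fst q then PV q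
       else if v = snd q then PW q else 0)" if "q \<in> Q" for v q
  proof -
    have "{u, fst q, snd q} \<in> CE" using that unfolding CE_def by auto
    then show ?thesis using CEn prq[OF that] unfolding h_def by auto
  qed
  have h0: "h v e = 0" if "e \<notin> E1" "e \<notin> E2" "e \<notin> CE" for v e
    using that unfolding h_def by auto
  have qV1: "fst q \<in> V1" and qV2: "snd q \<in> V2" if "q \<in> Q" for q using that QV by auto
  have L1: "(\<Sum>e\<in>E. h v e) = 1 - (\<Sum>e\<in>MA. if v \<in> e then dA e v else 0)
              + (\<Sum>q\<in>Q. if fst q = v then PV q else 0)" if v: "v \<in> V1" for v
  proof -
    have "(\<Sum>e\<in>E. h v e) = (\<Sum>e\<in>E1 \<union> CE. h v e)"
    proof (rule sum.mono_neutral_right[OF finE])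
      show "E1 \<union> CE \<subseteq> E" using E12 CEsub by auto
      show "\<forall>i\<in>E - (E1 \<union> CE). h v i = 0"
      proof
        fix e assume "e \<in> E - (E1 \<union> CE)"
        then show "h v e = 0"
        proof (cases "e \<in> E2")
          case True
          then have "v \<notin> e" using E2V v dj12 by blast
          then show ?thesis using hE2[OF True] by simp
        qed (auto intro: h0)
      qed
    qed
    also have "\<dots> = (\<Sum>e\<in>E1. h v e) + (\<Sum>e\<in>CE. h v e)"
      by (rule sum.union_disjoint) (use finE1 finCE CEn in auto)
    also have "(\<Sum>e\<in>E1. h v e) = (\<Sum>e\<in>E1. if v \<in> e then std v else 0)
         - (\<Sum>e\<in>E1. if e \<in> MA then (if v \<in> e then dA e v else 0) else 0)"
      by (subst sum_subtractf[symmetric]) (rule sum.cong, auto simp: hE1)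
    also have "(\<Sum>e\<in>E1. if e \<in> MA then (if v \<in> e then dA e v else 0) else 0)
        = (\<Sum>e\<in>E1 \<inter> MA. if v \<in> e then dA e v else 0)"
      by (rule sum.inter_restrict[symmetric, OF finE1])
    also have "E1 \<inter> MA = MA" using M by auto
    also have "(\<Sum>e\<in>CE. h v e) = (\<Sum>q\<in>Q. h v {u, fst q, snd q})"
      unfolding CE_def by (rule sum.reindex[OF injCE, unfolded comp_def])
    also have "\<dots> = (\<Sum>q\<in>Q. if fst q = v then PV q else 0)"
    proof (rule sum.cong[OF refl])
      fix q assume q: "q \<in> Q"
      have "v \<noteq> u" using v un by auto
      moreover have "v \<noteq> snd q" using qV2[OF q] v dj12 by auto
      ultimately show "h v {u, fst q, snd q} = (if fst q = v then PV q else 0)"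
        using hCE[OF q] by auto
    qed
    finally show ?thesis using deg1[OF v] by simp
  qed
  have L2: "(\<Sum>e\<in>E. h v e) = 1 - (\<Sum>e\<in>MB. if v \<in> e then dB e v else 0)
              + (\<Sum>q\<in>Q. if snd q = v then PW q else 0)" if v: "v \<in> V2" for v
  proof -
    have "(\<Sum>e\<in>E. h v e) = (\<Sum>e\<in>E2 \<union> CE. h v e)"
    proof (rule sum.mono_neutral_right[OF finE])
      show "E2 \<union> CE \<subseteq> E" using E12 CEsub by auto
      show "\<forall>i\<in>E - (E2 \<union> CE). h v i = 0"
      proof
        fix e assume "e \<in> E - (E2 \<union> CE)"
        then show "h v e = 0"
        proof (cases "e \<in> E1")
          case True
          then have "v \<notin> e" using E1V v dj12 by blast
          then show ?thesis using hE1[OF True] by simp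
        qed (auto intro: h0)
      qed
    qed
    also have "\<dots> = (\<Sum>e\<in>E2. h v e) + (\<Sum>e\<in>CE. h v e)"
      by (rule sum.union_disjoint) (use finE2 finCE CEn in auto)
    also have "(\<Sum>e\<in>E2. h v e) = (\<Sum>e\<in>E2. if v \<in> e then std v else 0)
         - (\<Sum>e\<in>E2. if e \<in> MB then (if v \<in> e then dB e v else 0) else 0)"
      by (subst sum_subtractf[symmetric]) (rule sum.cong, auto simp: hE2)
    also have "(\<Sum>e\<in>E2. if e \<in> MB then (if v \<in> e then dB e v else 0) else 0)
        = (\<Sum>e\<in>E2 \<inter> MB. if v \<in> e then dB e v else 0)"
      by (rule sum.inter_restrict[symmetric, OF finE2])
    also have "E2 \<inter> MB = MB" using M by auto
    also have "(\<Sum>e\<in>CE. h v e) = (\<Sum>q\<in>Q. h v {u, fst q, snd q})"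
      unfolding CE_def by (rule sum.reindex[OF injCE, unfolded comp_def])
    also have "\<dots> = (\<Sum>q\<in>Q. if snd q = v then PW q else 0)"
    proof (rule sum.cong[OF refl])
      fix q assume q: "q \<in> Q"
      have "v \<noteq> u" using v un by auto
      moreover have "v \<noteq> fst q" using qV1[OF q] v dj12 by auto
      ultimately show "h v {u, fst q, snd q} = (if snd q = v then PW q else 0)"
        using hCE[OF q] by auto
    qed
    finally show ?thesis using deg2[OF v] by simp
  qed
  have Lu: "(\<Sum>e\<in>E. h u e) = (\<Sum>q\<in>Q. PU q)"
  proof -
    have "(\<Sum>e\<in>E. h u e) = (\<Sum>e\<in>CE. h u e)"
    proof (rule sum.mono_neutral_right[OF finE CEsub], rule)
      fix e assume "e \<in> E - CE"
      then show "h u e = 0"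
        by (cases "e \<in> E1"; cases "e \<in> E2") (auto simp: hE1 hE2 uE1 uE2 intro: h0)
    qed
    also have "\<dots> = (\<Sum>q\<in>Q. h u {u, fst q, snd q})"
      unfolding CE_def by (rule sum.reindex[OF injCE, unfolded comp_def])
    also have "\<dots> = (\<Sum>q\<in>Q. PU q)" by (rule sum.cong) (auto simp: hCE)
    finally show ?thesis .
  qed

  have hval: "0 \<le> h v e \<and> h v e \<le> 1 \<and> (h v e \<noteq> 0 \<longrightarrow> mm \<le> h v e)" if e: "e \<in> E" for v e
  proof -
    have m0: "0 < mm" "mm \<le> std v" "std v \<le> 1" using std_bounds by auto
    consider "e \<in> E1" | "e \<in> E2" | "e \<in> CE" | "e \<notin> E1" "e \<notin> E2" "e \<notin> CE" by blast
    then show ?thesis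
    proof cases
      case 1
      show ?thesis
      proof (cases "v \<in> e \<and> e \<in> MA")
        case True then show ?thesis using hE1[OF 1, of v] val1 m0 by force
      qed (use hE1[OF 1, of v] m0 in auto)
    next
      case 2
      show ?thesis
      proof (cases "v \<in> e \<and> e \<in> MB")
        case True then show ?thesis using hE2[OF 2, of v] val2 m0 by force
      qed (use hE2[OF 2, of v] m0 in auto)
    next
      case 3
      then obtain q where q: "q \<in> Q" "e = {u, fst q, snd q}" unfolding CE_def by auto
      show ?thesis using hCE[OF q(1), of v] cv q m0 by auto
    next
      case 4 then show ?thesis using h0 by simp
    qed
  qed
  have hout: "h v e = 0" if "e \<in> E" "v \<notin> e" for v e
  proof -
    consider "e \<in> E1" | "e \<in> E2" | "e \<in> CE" | "e \<notin> E1" "e \<notin> E2" "e \<notin> CE" by blast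
    then show ?thesis
    proof cases
      case 3
      then obtain q where q: "q \<in> Q" "e = {u, fst q, snd q}" unfolding CE_def by auto
      show ?thesis using hCE[OF q(1), of v] q that by auto
    qed (use that hE1 hE2 h0 in auto)
  qed
  have lab: "\<exists>x y z. e = {x, y, z} \<and> x \<noteq> y \<and> x \<noteq> z \<and> y \<noteq> z \<and>
        h x e \<le> h y e \<and> h y e \<le> h z e \<and>
        h x e / real a \<ge> h y e / real b \<and> h y e / real b \<ge> h z e / real c" if e: "e \<in> E" for e
  proof -
    consider "e \<in> E1" | "e \<in> E2" | "e \<in> CE" | "e \<notin> E1" "e \<notin> E2" "e \<notin> CE" by blast
    then show ?thesis
    proof cases
      case 1
      then obtain x y z where xyz: "e = {x,y,z}" "x \<in> A1" "y \<in> B1" "z \<in> C1" using c3p_mem by blast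
      have dist: "x \<noteq> y" "x \<noteq> z" "y \<noteq> z" using xyz dj1 by auto
      show ?thesis
      proof (cases "e \<in> MA")
        case True
        have "tri_ok a b c (std x - dA e x) (std y - dA e y) (std z - dA e z)"
          using adm1 True xyz by blast
        then have "tri_ok a b c (h x e) (h y e) (h z e)" using hE1[OF 1] True xyz by simp
        from tri_label[where f="\<lambda>v. h v e", OF this dist] show ?thesis using xyz by auto
      next
        case False
        then have hh: "h x e = std x" "h y e = std y" "h z e = std z" using hE1[OF 1] xyz by auto
        have so: "std x \<le> std y \<and> std y \<le> std z \<and> std x / real a \<ge> std y / real b \<and> std y / real b \<ge> std z / real c"
          using std_ok3[of x y z] xyz by blast
        show ?thesis
          apply (rule exI[of _ x], rule exI[of _ y], rule exI[of _ z])
          using so hh xyz(1) dist by simp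
      qed
    next
      case 2
      then obtain x y z where xyz: "e = {x,y,z}" "x \<in> A2" "y \<in> B2" "z \<in> C2" using c3p_mem by blast
      have dist: "x \<noteq> y" "x \<noteq> z" "y \<noteq> z" using xyz dj2 by auto
      show ?thesis
      proof (cases "e \<in> MB")
        case True
        have "tri_ok a b c (std x - dB e x) (std y - dB e y) (std z - dB e z)"
          using adm2 True xyz by blast
        then have "tri_ok a b c (h x e) (h y e) (h z e)" using hE2[OF 2] True xyz by simp
        from tri_label[where f="\<lambda>v. h v e", OF this dist] show ?thesis using xyz by auto
      next
        case False
        then have hh: "h x e = std x" "h y e = std y" "h z e = std z" using hE2[OF 2] xyz by auto
        have so: "std x \<le> std y \<and> std y \<le> std z \<and> std x / real a \<ge> std y / real b \<and> std y / real b \<ge> std z / real c"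
          using std_ok3[of x y z] xyz by blast
        show ?thesis
          apply (rule exI[of _ x], rule exI[of _ y], rule exI[of _ z])
          using so hh xyz(1) dist by simp
      qed
    next
      case 3
      then obtain q where q: "q \<in> Q" "e = {u, fst q, snd q}" unfolding CE_def by auto
      have f1: "fst q \<in> V1" and f2: "snd q \<in> V2" using qV1[OF q(1)] qV2[OF q(1)] by auto
      have dist: "u \<noteq> fst q" "u \<noteq> snd q" "fst q \<noteq> snd q"
        using V1_not_V2[OF f1] V1_not_u[OF f1] V2_not_u[OF f2] f2 by metis+
      have "h u e = PU q" "h (fst q) e = PV q" "h (snd q) e = PW q"
        using hCE[OF q(1)] q dist by auto
      then have "tri_ok a b c (h u e) (h (fst q) e) (h (snd q) e)" using cv q by simp
      from tri_label[where f="\<lambda>v. h v e", OF this dist] show ?thesis using q by auto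
    next
      case 4
      obtain x y z where xyz: "e = {x,y,z}" "x \<noteq> y" "x \<noteq> z" "y \<noteq> z" using zero_label[OF e] by blast
      have hz: "h x e = 0" "h y e = 0" "h z e = 0" using h0[OF 4] by auto
      show ?thesis
        apply (rule exI[of _ x], rule exI[of _ y], rule exI[of _ z])
        using xyz hz by simp
    qed
  qed
  have uV: "u \<notin> V1 \<union> V2" using un by auto
  have finM1: "finite MA" using M finE1 finite_subset by blast
  have finM2: "finite MB" using M finE2 finite_subset by blast
  have S1: "(\<Sum>v\<in>V1. \<Sum>e\<in>E. h v e) = real (a+b+c) - (\<Sum>e\<in>MA. \<Sum>v\<in>e. dA e v) + (\<Sum>q\<in>Q. PV q)"
  proof -
    have "(\<Sum>v\<in>V1. \<Sum>e\<in>E. h v e) = (\<Sum>v\<in>V1. 1 - (\<Sum>e\<in>MA. if v \<in> e then dA e v else 0)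
              + (\<Sum>q\<in>Q. if fst q = v then PV q else 0))" by (rule sum.cong) (auto simp: L1)
    also have "\<dots> = real (card V1) - (\<Sum>v\<in>V1. \<Sum>e\<in>MA. if v \<in> e then dA e v else 0)
        + (\<Sum>v\<in>V1. \<Sum>q\<in>Q. if fst q = v then PV q else 0)"
      by (simp add: sum.distrib sum_subtractf)
    also have "(\<Sum>v\<in>V1. \<Sum>e\<in>MA. if v \<in> e then dA e v else 0) = (\<Sum>e\<in>MA. \<Sum>v\<in>V1. if v \<in> e then dA e v else 0)"
      by (rule sum.swap)
    also have "\<dots> = (\<Sum>e\<in>MA. \<Sum>v\<in>e. dA e v)"
    proof (rule sum.cong[OF refl])
      fix e assume "e \<in> MA"
      then have "V1 \<inter> e = e" using M E1V by blast
      then show "(\<Sum>v\<in>V1. if v \<in> e then dA e v else 0) = (\<Sum>v\<in>e. dA e v)"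
        using sum.inter_restrict[OF finV1, of "dA e" e] by simp
    qed
    also have "(\<Sum>v\<in>V1. \<Sum>q\<in>Q. if fst q = v then PV q else 0) = (\<Sum>q\<in>Q. \<Sum>v\<in>V1. if fst q = v then PV q else 0)"
      by (rule sum.swap)
    also have "\<dots> = (\<Sum>q\<in>Q. PV q)"
      by (rule sum.cong[OF refl]) (use qV1 finV1 in \<open>simp add: sum.delta\<close>)
    finally show ?thesis using cardV1 by simp
  qed
  have S2: "(\<Sum>v\<in>V2. \<Sum>e\<in>E. h v e) = real (a+b+c) - (\<Sum>e\<in>MB. \<Sum>v\<in>e. dB e v) + (\<Sum>q\<in>Q. PW q)"
  proof -
    have "(\<Sum>v\<in>V2. \<Sum>e\<in>E. h v e) = (\<Sum>v\<in>V2. 1 - (\<Sum>e\<in>MB. if v \<in> e then dB e v else 0)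
              + (\<Sum>q\<in>Q. if snd q = v then PW q else 0))" by (rule sum.cong) (auto simp: L2)
    also have "\<dots> = real (card V2) - (\<Sum>v\<in>V2. \<Sum>e\<in>MB. if v \<in> e then dB e v else 0)
        + (\<Sum>v\<in>V2. \<Sum>q\<in>Q. if snd q = v then PW q else 0)"
      by (simp add: sum.distrib sum_subtractf)
    also have "(\<Sum>v\<in>V2. \<Sum>e\<in>MB. if v \<in> e then dB e v else 0) = (\<Sum>e\<in>MB. \<Sum>v\<in>V2. if v \<in> e then dB e v else 0)"
      by (rule sum.swap)
    also have "\<dots> = (\<Sum>e\<in>MB. \<Sum>v\<in>e. dB e v)"
    proof (rule sum.cong[OF refl])
      fix e assume "e \<in> MB"
      then have "V2 \<inter> e = e" using M E2V by blast
      then show "(\<Sum>v\<in>V2. if v \<in> e then dB e v else 0) = (\<Sum>v\<in>e. dB e v)"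
        using sum.inter_restrict[OF finV2, of "dB e" e] by simp
    qed
    also have "(\<Sum>v\<in>V2. \<Sum>q\<in>Q. if snd q = v then PW q else 0) = (\<Sum>q\<in>Q. \<Sum>v\<in>V2. if snd q = v then PW q else 0)"
      by (rule sum.swap)
    also have "\<dots> = (\<Sum>q\<in>Q. PW q)"
      by (rule sum.cong[OF refl]) (use qV2 finV2 in \<open>simp add: sum.delta\<close>)
    finally show ?thesis using cardV2 by simp
  qed
  have W: "tiling_weight (insert u (V1 \<union> V2)) E h = (\<Sum>q\<in>Q. PU q) + (real (a+b+c) - (\<Sum>e\<in>MA. \<Sum>v\<in>e. dA e v) + (\<Sum>q\<in>Q. PV q))
     + (real (a+b+c) - (\<Sum>e\<in>MB. \<Sum>v\<in>e. dB e v) + (\<Sum>q\<in>Q. PW q))"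
  proof -
    have "tiling_weight (insert u (V1 \<union> V2)) E h = (\<Sum>e\<in>E. h u e) + (\<Sum>v\<in>V1 \<union> V2. \<Sum>e\<in>E. h v e)"
      unfolding tiling_weight_def using uV finV1 finV2 by (simp add: sum.insert)
    also have "(\<Sum>v\<in>V1 \<union> V2. \<Sum>e\<in>E. h v e) = (\<Sum>v\<in>V1. \<Sum>e\<in>E. h v e) + (\<Sum>v\<in>V2. \<Sum>e\<in>E. h v e)"
      by (rule sum.union_disjoint) (use finV1 finV2 dj12 in auto)
    finally show ?thesis using Lu S1 S2 by simp
  qed
  have sc: "s / real c = 1 / (real a * real b * real c ^ 2)" by (simp add: sv_def power2_eq_square field_simps)
  have mmeq: "mm = 1 / (real b * real c ^ 2)" using apos by (simp add: sv_def power2_eq_square field_simps)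
  have wt: "tiling_weight (insert u (V1 \<union> V2)) E h \<ge> 2 * real (a + b + c) + 1 / (real a * real b * real c ^ 2)"
    using W gain sc by (simp add: sum.distrib)
  have tl: "frac_hom_tiling a b c (insert u (V1 \<union> V2)) E h"
    unfolding frac_hom_tiling_def
  proof (intro conjI ballI impI)
    fix v e assume "v \<in> insert u (V1 \<union> V2)" "e \<in> E"
    then show "0 \<le> h v e" "h v e \<le> 1" using hval by auto
  next
    fix v e assume "v \<in> insert u (V1 \<union> V2)" "e \<in> E" "v \<notin> e"
    then show "h v e = 0" using hout by auto
  next
    fix v assume "v \<in> insert u (V1 \<union> V2)"
    then consider "v = u" | "v \<in> V1" | "v \<in> V2" by blast
    then show "(\<Sum>e\<in>E. h v e) \<le> 1"
    proof cases
      case 1 then show ?thesis using Lu loadu by simp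
    next
      case 2 then show ?thesis using L1 load1 by fastforce
    next
      case 3 then show ?thesis using L2 load2 by fastforce
    qed
  next
    fix e assume "e \<in> E" then show "\<exists>x y z. e = {x, y, z} \<and> x \<noteq> y \<and> x \<noteq> z \<and> y \<noteq> z \<and>
        h x e \<le> h y e \<and> h y e \<le> h z e \<and>
        h y e / real b \<le> h x e / real a \<and> h z e / real c \<le> h y e / real b" using lab by blast
  qed
  define SS where "SS = {h v e |v e. v \<in> insert u (V1 \<union> V2) \<and> e \<in> E \<and> h v e \<noteq> 0}"
  have finSS: "finite SS"
  proof -
    have "SS \<subseteq> (\<lambda>(v,e). h v e) ` (insert u (V1 \<union> V2) \<times> E)" unfolding SS_def by auto
    moreover have "finite (insert u (V1 \<union> V2) \<times> E)" using finV1 finV2 finE by simp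
    ultimately show ?thesis using finite_subset by blast
  qed
  have neSS: "SS \<noteq> {}"
  proof -
    have "A1 \<noteq> {}" "B1 \<noteq> {}" "C1 \<noteq> {}" using cards abc by auto
    then obtain x y z where xyz: "x \<in> A1" "y \<in> B1" "z \<in> C1" by blast
    let ?e = "{x,y,z}"
    have eE1: "?e \<in> E1" using xyz unfolding complete3partite_def by blast
    have "h x ?e \<ge> mm"
    proof (cases "?e \<in> MA")
      case True then show ?thesis using hE1[OF eE1, of x] val1 by auto
    next
      case False then show ?thesis using hE1[OF eE1, of x] std_bounds by auto
    qed
    then have "h x ?e \<noteq> 0" using std_bounds by auto
    then have "h x ?e \<in> SS" unfolding SS_def using xyz eE1 E12 by blast
    then show ?thesis by auto
  qed
  have hm: "tiling_hmin (insert u (V1 \<union> V2)) E h \<ge> 1 / (real b * real c ^ 2)"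
  proof -
    have "\<forall>x\<in>SS. mm \<le> x" unfolding SS_def using hval by auto
    then have "mm \<le> Min SS" using Min_ge_iff[OF finSS neSS] by auto
    then show ?thesis unfolding tiling_hmin_def SS_def[symmetric] using mmeq by simp
  qed
  show ?thesis unfolding GOAL_def using tl wt hm by blast
qed

end



lemma part_eq:
  assumes "{x,y,z} = {x',y',z'}" "x \<in> A" "x' \<in> A" "y \<in> B" "y' \<in> B" "z \<in> C" "z' \<in> C"
    "A \<inter> B = {}" "A \<inter> C = {}" "B \<inter> C = {}"
  shows "x = x' \<and> y = y' \<and> z = z'"
proof -
  have "x \<in> {x',y',z'}" "y \<in> {x',y',z'}" "z \<in> {x',y',z'}" using assms(1) by auto
  then show ?thesis using assms(2-) by blast
qed

context L2s begin

lemma adm_one: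
  assumes "x1 \<in> A" "y1 \<in> B" "z1 \<in> C" "A \<inter> B = {}" "A \<inter> C = {}" "B \<inter> C = {}"
    "tri_ok a b c (std x1 - d e1 x1) (std y1 - d e1 y1) (std z1 - d e1 z1)" "e1 = {x1,y1,z1}"
  shows "\<forall>e\<in>{e1}. \<forall>x\<in>A. \<forall>y\<in>B. \<forall>z\<in>C. e = {x,y,z} \<longrightarrow>
        tri_ok a b c (std x - d e x) (std y - d e y) (std z - d e z)"
proof (intro ballI impI)
  fix e x y z assume h: "e \<in> {e1}" "x \<in> A" "y \<in> B" "z \<in> C" "e = {x,y,z}"
  have "{x1,y1,z1} = {x,y,z}" using h assms(8) by simp
  then have "x1 = x \<and> y1 = y \<and> z1 = z" using part_eq[of x1 y1 z1 x y z A B C] assms(1-6) h(2-4) by blast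
  then show "tri_ok a b c (std x - d e x) (std y - d e y) (std z - d e z)" using assms h by simp
qed

lemma rf: "real a \<ge> 1" "real b \<ge> real a" "real c \<ge> real b" "real c \<ge> real a + 1" "real c \<ge> 2"
  "s > 0" "real a * real b * real c * s = 1"
  using abc abcs s_pos by auto

lemma ex_parts: "\<exists>x. x \<in> A1" "\<exists>x. x \<in> B1" "\<exists>x. x \<in> C1" "\<exists>x. x \<in> A2" "\<exists>x. x \<in> B2" "\<exists>x. x \<in> C2"
  using cards abc by (auto simp: card_gt_0_iff[symmetric] ex_in_conv) 

lemma config_CC:
  assumes cb: "b < c" and z1: "z1 \<in> C1" and z2: "z2 \<in> C2" and uE: "{u, z1, z2} \<in> E"
  shows "GOAL a b c (insert u (V1 \<union> V2)) E"
proof -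
  obtain x1 y1 x2 y2 where p: "x1 \<in> A1" "y1 \<in> B1" "x2 \<in> A2" "y2 \<in> B2" using ex_parts by blast
  define t where "t = real a * s / real c"
  define e1 where "e1 = {x1,y1,z1}"
  define e2 where "e2 = {x2,y2,z2}"
  have e1E: "e1 \<in> E1" and e2E: "e2 \<in> E2" unfolding e1_def e2_def complete3partite_def using p z1 z2 by blast+
  have cb1: "real c \<ge> real b + 1" using cb by simp
  have tpos: "t > 0" unfolding t_def using rf by simp
  have ac: "real a / real c \<le> 1" using rf by simp
  have t_le: "t \<le> (real c - real b) * s"
  proof -
    have "t = (real a / real c) * s" unfolding t_def by simp
    also have "\<dots> \<le> 1 * s" using ac rf by (intro mult_right_mono) auto
    also have "\<dots> \<le> (real c - real b) * s" using cb1 rf by simp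
    finally show ?thesis .
  qed
  have mt: "mm \<le> t" unfolding t_def by simp
  have t1: "t \<le> 1" using std_bounds(1,2)[of x1] unfolding t_def by linarith
  have stdz1: "std z1 = real c * s" "std x1 = real a * s" "std y1 = real b * s"
    using std_C std_A std_B z1 p by auto
  have stdz2: "std z2 = real c * s" "std x2 = real a * s" "std y2 = real b * s"
    using std_C std_A std_B z2 p by auto
  have okC: "tri_ok a b c (real a * s) (real b * s) (real c * s - t)"
  proof -
    have r1: "real a * s \<le> real b * s" using rf by (intro mult_right_mono) auto
    have r2: "real b * s \<le> real c * s - t" using t_le by (simp add: algebra_simps)
    have r3: "real b * s / real b \<le> real a * s / real a" using rf by simp
    have "(real c * s - t) / real c \<le> s" using tpos rf by (simp add: divide_le_eq)
    then have r4: "(real c * s - t) / real c \<le> real b * s / real b" using rf by simp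
    show ?thesis unfolding tri_ok_def ok3_def using r1 r2 r3 r4 by blast
  qed
  have mz: "mm \<le> real c * s - t"
  proof -
    have "2 * t \<le> real c * s"
    proof -
      have "2 * t = (2 * real a / real c) * s" unfolding t_def by simp
      also have "\<dots> \<le> real c * s"
      proof (intro mult_right_mono)
        have "2 * real c \<le> real c * real c" using rf by (intro mult_right_mono) auto
        then have "2 * real a \<le> real c * real c" using rf by linarith
        then show "2 * real a / real c \<le> real c" using rf by (simp add: divide_le_eq)
      qed (use rf in auto)
      finally show ?thesis .
    qed
    then show ?thesis using mt by simp
  qed
  show ?thesis
  proof (rule generic[where MA="{e1}" and MB="{e2}" and dA="\<lambda>e v. if v = z1 then t else 0"
       and dB="\<lambda>e v. if v = z2 then t else 0" and Q="{(z1,z2)}" and PU="\<lambda>_. t" and PV="\<lambda>_. t" and PW="\<lambda>_. t"])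
    show "{e1} \<subseteq> E1" "{e2} \<subseteq> E2" "finite {(z1, z2)}" using e1E e2E by auto
    show "{(z1, z2)} \<subseteq> V1 \<times> V2" using z1 z2 by auto
    show "\<forall>q\<in>{(z1, z2)}. {u, fst q, snd q} \<in> E" using uE by simp
    show "\<forall>e\<in>{e1}. \<forall>x\<in>A1. \<forall>y\<in>B1. \<forall>z\<in>C1. e = {x, y, z} \<longrightarrow>
      tri_ok a b c (std x - (if x = z1 then t else 0)) (std y - (if y = z1 then t else 0)) (std z - (if z = z1 then t else 0))"
      by (rule adm_one[where d="\<lambda>e v. if v = z1 then t else 0"]) (use p z1 dj1 stdz1 okC e1_def in auto)
    show "\<forall>e\<in>{e2}. \<forall>x\<in>A2. \<forall>y\<in>B2. \<forall>z\<in>C2. e = {x, y, z} \<longrightarrow>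
      tri_ok a b c (std x - (if x = z2 then t else 0)) (std y - (if y = z2 then t else 0)) (std z - (if z = z2 then t else 0))"
      by (rule adm_one[where d="\<lambda>e v. if v = z2 then t else 0"]) (use p z2 dj2 stdz2 okC e2_def in auto)
    show "\<forall>e\<in>{e1}. \<forall>v\<in>e. 0 \<le> (if v = z1 then t else 0) \<and> mm \<le> std v - (if v = z1 then t else 0)"
    proof (intro ballI)
      fix e v assume "e \<in> {e1}" "v \<in> e"
      show "0 \<le> (if v = z1 then t else 0) \<and> mm \<le> std v - (if v = z1 then t else 0)"
      proof (cases "v = z1")
        case True then show ?thesis using tpos mz stdz1 by simp
      next
        case False then show ?thesis using std_bounds(1)[of v] by simp
      qed
    qed
    show "\<forall>e\<in>{e2}. \<forall>v\<in>e. 0 \<le> (if v = z2 then t else 0) \<and> mm \<le> std v - (if v = z2 then t else 0)"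
    proof (intro ballI)
      fix e v assume "e \<in> {e2}" "v \<in> e"
      show "0 \<le> (if v = z2 then t else 0) \<and> mm \<le> std v - (if v = z2 then t else 0)"
      proof (cases "v = z2")
        case True then show ?thesis using tpos mz stdz2 by simp
      next
        case False then show ?thesis using std_bounds(1)[of v] by simp
      qed
    qed
    show "\<forall>q\<in>{(z1, z2)}. mm \<le> t \<and> t \<le> 1 \<and> mm \<le> t \<and> t \<le> 1 \<and> mm \<le> t \<and> t \<le> 1 \<and> tri_ok a b c t t t"
      using mt t1 rf tpos unfolding tri_ok_def ok3_def by (auto simp: frac_le)
    show "\<forall>v\<in>V1. (\<Sum>q\<in>{(z1, z2)}. if fst q = v then t else 0) \<le> (\<Sum>e\<in>{e1}. if v \<in> e then if v = z1 then t else 0 else 0)"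
      using tpos e1_def by auto
    show "\<forall>w\<in>V2. (\<Sum>q\<in>{(z1, z2)}. if snd q = w then t else 0) \<le> (\<Sum>e\<in>{e2}. if w \<in> e then if w = z2 then t else 0 else 0)"
      using tpos e2_def by auto
    show "(\<Sum>q\<in>{(z1, z2)}. t) \<le> 1" using t1 by simp
    show "s / real c \<le> (\<Sum>q\<in>{(z1, z2)}. t + t + t) - (\<Sum>e\<in>{e1}. \<Sum>v\<in>e. if v = z1 then t else 0) -
       (\<Sum>e\<in>{e2}. \<Sum>v\<in>e. if v = z2 then t else 0)"
    proof -
      have "(\<Sum>v\<in>e1. if v = z1 then t else 0) = t" unfolding e1_def using sum.delta[of "{x1,y1,z1}" z1 "\<lambda>_. t"] by simp
      moreover have "(\<Sum>v\<in>e2. if v = z2 then t else 0) = t" unfolding e2_def using sum.delta[of "{x2,y2,z2}" z2 "\<lambda>_. t"] by simp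
      moreover have "s / real c \<le> t" unfolding t_def using rf by (simp add: divide_right_mono)
      ultimately show ?thesis by simp
    qed
  qed
qed

lemma sum3: "x \<noteq> y \<Longrightarrow> x \<noteq> z \<Longrightarrow> y \<noteq> z \<Longrightarrow> (\<Sum>v\<in>{x,y,z}. f v) = f x + f y + f z"
  by (simp add: add.assoc)

lemma val_ok:
  assumes "\<forall>v\<in>e. 0 \<le> d v" "\<forall>v\<in>e. d v \<noteq> 0 \<longrightarrow> mm \<le> std v - d v"
  shows "\<forall>e'\<in>{e}. \<forall>v\<in>e'. 0 \<le> d v \<and> mm \<le> std v - d v"
  using assms std_bounds(1) by force

lemma smul: "X \<le> Y \<Longrightarrow> X * s \<le> Y * s" using s_pos by (simp add: mult_right_mono)

lemma s_half: "s \<le> 1/2"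
proof -
  have "real a * real b * real c \<ge> 2"
  proof -
    have "real a * real b \<ge> 1 * 1" using rf by (intro mult_mono) auto
    then have "real a * real b * real c \<ge> 1 * 2" using rf by (intro mult_mono) auto
    then show ?thesis by simp
  qed
  then show ?thesis unfolding sv_def by (simp add: field_simps)
qed

lemma config_CB:
  assumes ab: "a < b" and bc: "b < c" and z1: "z1 \<in> C1" and y2: "y2 \<in> B2" and uE: "{u, z1, y2} \<in> E"
  shows "GOAL a b c (insert u (V1 \<union> V2)) E"
proof -
  obtain x1 y1 x2 z2 where p: "x1 \<in> A1" "y1 \<in> B1" "x2 \<in> A2" "z2 \<in> C2" using ex_parts by blast
  define t where "t = real a * s / real c"
  define w where "w = real b * s / real c"
  define r where "r = real a * s / real b"
  define e1 where "e1 = {x1,y1,z1}"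
  define e2 where "e2 = {x2,y2,z2}"
  have e1E: "e1 \<in> E1" and e2E: "e2 \<in> E2" unfolding e1_def e2_def complete3partite_def using p z1 y2 by blast+
  have d1: "x1 \<noteq> y1" "x1 \<noteq> z1" "y1 \<noteq> z1" using p z1 dj1 by auto
  have d2: "x2 \<noteq> y2" "x2 \<noteq> z2" "y2 \<noteq> z2" using p y2 dj2 by auto
  have ra: "real a \<ge> 1" and rab: "real b \<ge> real a + 1" and rbc: "real c \<ge> real b + 1"
    and spos: "s > 0" using rf ab bc by auto
  have rb: "real b \<ge> 2" and rc: "real c \<ge> 3" using ra rab rbc by auto
  have std1: "std x1 = real a * s" "std y1 = real b * s" "std z1 = real c * s"
    using std_C std_A std_B z1 p by auto
  have std2: "std x2 = real a * s" "std y2 = real b * s" "std z2 = real c * s"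
    using std_C std_A std_B y2 p by auto
  have mmt: "mm = t" unfolding t_def ..
  have bc_ge: "real b * real c \<ge> 2 * real a" 
  proof -
    have "real b * real c \<ge> 2 * real c" using rb rc by (intro mult_right_mono) auto
    then show ?thesis using rf by linarith
  qed
  have cc_ge: "real c * real c \<ge> real a + real b"
  proof -
    have "real c * real c \<ge> 2 * real c" using rc by (intro mult_right_mono) auto
    then show ?thesis using rf by linarith
  qed
  have c_bma: "real c * (real b - real a) \<ge> real b"
  proof -
    have "real c * (real b - real a) \<ge> real c * 1" using rab rf by (intro mult_left_mono) auto
    then show ?thesis using rf by linarith
  qed
  have c_cmb: "real c * (real c - real b) \<ge> real b"
  proof -
    have "real c * (real c - real b) \<ge> real c * 1" using rbc rf by (intro mult_left_mono) auto
    then show ?thesis using rf by linarith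
  qed
  have tpos: "t > 0" "w > 0" "r > 0" unfolding t_def w_def r_def using rf spos by auto
  have okA: "tri_ok a b c (real a * s) (real b * s) (real c * s - w)"
  proof -
    have r1: "real a * s \<le> real b * s" using rf by (intro smul) auto
    have "w \<le> (real c - real b) * s" unfolding w_def using c_cmb rf spos
      by (simp add: divide_le_eq mult.commute mult_right_mono mult.assoc)
    then have r2: "real b * s \<le> real c * s - w" by (simp add: algebra_simps)
    have r3: "real b * s / real b \<le> real a * s / real a" using rf by simp
    have "(real c * s - w) / real c \<le> s" using tpos rf by (simp add: divide_le_eq)
    then have r4: "(real c * s - w) / real c \<le> real b * s / real b" using rf by simp
    show ?thesis unfolding tri_ok_def ok3_def using r1 r2 r3 r4 by blast
  qed
  have okB: "tri_ok a b c (real a * s) (real b * s - t) (real c * s - r)"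
  proof -
    have "real a / real c \<le> 1" using rf by simp
    then have "real a / real c * s \<le> (real b - real a) * s" using rab by (intro smul) linarith
    then have "t \<le> (real b - real a) * s" unfolding t_def by simp
    then have r1: "real a * s \<le> real b * s - t" by (simp add: algebra_simps)
    have "real a \<le> real b * real c" using bc_ge rf by linarith
    then have "real a * (real c - real b) \<le> real b * real c * (real c - real b)" using rbc
      by (intro mult_right_mono) auto
    then have "real a * (real c - real b) * s \<le> real b * real c * (real c - real b) * s" by (rule smul)
    then have r2: "real b * s - t \<le> real c * s - r" unfolding t_def r_def using rf
      by (simp add: field_simps)
    have r3: "(real b * s - t) / real b \<le> real a * s / real a" using tpos rf by (simp add: divide_le_eq)
    have r4: "(real c * s - r) / real c \<le> (real b * s - t) / real b" unfolding t_def r_def using rf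
      by (simp add: field_simps)
    show ?thesis unfolding tri_ok_def ok3_def using r1 r2 r3 r4 by blast
  qed
  have okQ: "tri_ok a b c s w t"
  proof -
    have "ok3 a b c t w s" unfolding ok3_def t_def w_def using rf spos
      by (auto simp: field_simps intro!: mult_right_mono)
    then show ?thesis unfolding tri_ok_def by blast
  qed
  have vals: "mm \<le> real c * s - w" "mm \<le> real b * s - t" "mm \<le> real c * s - r"
    "mm \<le> s" "mm \<le> w" "s \<le> 1" "w \<le> 1" "t \<le> 1"
  proof -
    have "(real a + real b) * s \<le> (real c * real c) * s" using cc_ge by (rule smul)
    then show "mm \<le> real c * s - w" unfolding w_def using rf by (simp add: field_simps)
    have "(2 * real a) * s \<le> (real b * real c) * s" using bc_ge by (rule smul)
    then show "mm \<le> real b * s - t" unfolding t_def using rf by (simp add: field_simps)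
    have "(real a * real b + real a * real c) * s \<le> (real c * real b * real c) * s"
    proof (rule smul)
      have "real a * real b \<le> real c * real b" "real a * real c \<le> real c * real c"
        using rf by (auto intro: mult_right_mono)
      moreover have "real c * real b + real c * real c \<le> real c * real b * real c"
      proof -
        have "2 * real c \<le> real b * real c" using rb rc by (intro mult_right_mono) auto
        then have "real b + real c \<le> real b * real c" using rf by linarith
        then have "real c * (real b + real c) \<le> real c * (real b * real c)" using rf by (intro mult_left_mono) auto
        then show ?thesis by (simp add: algebra_simps)
      qed
      ultimately show "real a * real b + real a * real c \<le> real c * real b * real c" by linarith
    qed
    then show "mm \<le> real c * s - r" unfolding r_def using rf by (simp add: field_simps)
    show "mm \<le> s" using rf by (simp add: field_simps)
    have "real a * s \<le> real b * s" using rf by (intro smul) auto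
    then show "mm \<le> w" unfolding w_def using rf by (simp add: divide_right_mono)
    show "s \<le> 1" using s_half by simp
    have "w \<le> s" unfolding w_def using rf by (simp add: field_simps)
    then show "w \<le> 1" using s_half by simp
    show "t \<le> 1" using std_bounds(1,2)[of x1] unfolding t_def by linarith
  qed
  have gain: "s / real c \<le> s - r"
  proof -
    have "(real b + real a * real c) * s \<le> (real b * real c) * s" using c_bma by (intro smul) (simp add: algebra_simps)
    then show ?thesis unfolding r_def using rf by (simp add: field_simps)
  qed
  show ?thesis
  proof (rule generic[where MA="{e1}" and MB="{e2}" and dA="\<lambda>e v. if v = z1 then w else 0"
       and dB="\<lambda>e v. if v = y2 then t else if v = z2 then r else 0" and Q="{(z1,y2)}"
       and PU="\<lambda>_. s" and PV="\<lambda>_. w" and PW="\<lambda>_. t"])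
    show "{e1} \<subseteq> E1" "{e2} \<subseteq> E2" "finite {(z1, y2)}" using e1E e2E by auto
    show "{(z1, y2)} \<subseteq> V1 \<times> V2" using z1 y2 by auto
    show "\<forall>q\<in>{(z1, y2)}. {u, fst q, snd q} \<in> E" using uE by simp
    show "\<forall>e\<in>{e1}. \<forall>x\<in>A1. \<forall>y\<in>B1. \<forall>z\<in>C1. e = {x, y, z} \<longrightarrow>
      tri_ok a b c (std x - (if x = z1 then w else 0)) (std y - (if y = z1 then w else 0)) (std z - (if z = z1 then w else 0))"
      by (rule adm_one[where d="\<lambda>e v. if v = z1 then w else 0"]) (use p z1 dj1 d1 std1 okA e1_def in auto)
    show "\<forall>e\<in>{e2}. \<forall>x\<in>A2. \<forall>y\<in>B2. \<forall>z\<in>C2. e = {x, y, z} \<longrightarrow>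
      tri_ok a b c (std x - (if x = y2 then t else if x = z2 then r else 0))
        (std y - (if y = y2 then t else if y = z2 then r else 0)) (std z - (if z = y2 then t else if z = z2 then r else 0))"
      by (rule adm_one[where d="\<lambda>e v. if v = y2 then t else if v = z2 then r else 0"]) (use p y2 dj2 d2 std2 okB e2_def in auto)
    show "\<forall>e\<in>{e1}. \<forall>v\<in>e. 0 \<le> (if v = z1 then w else 0) \<and> mm \<le> std v - (if v = z1 then w else 0)"
      by (rule val_ok) (use tpos vals std1 d1 in \<open>auto simp: e1_def\<close>)
    show "\<forall>e\<in>{e2}. \<forall>v\<in>e. 0 \<le> (if v = y2 then t else if v = z2 then r else 0) \<and>
         mm \<le> std v - (if v = y2 then t else if v = z2 then r else 0)"
      by (rule val_ok) (use tpos vals std2 d2 in \<open>auto simp: e2_def\<close>)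
    show "\<forall>q\<in>{(z1, y2)}. mm \<le> s \<and> s \<le> 1 \<and> mm \<le> w \<and> w \<le> 1 \<and> mm \<le> t \<and> t \<le> 1 \<and> tri_ok a b c s w t"
      using vals okQ mmt by auto
    show "\<forall>v\<in>V1. (\<Sum>q\<in>{(z1, y2)}. if fst q = v then w else 0) \<le> (\<Sum>e\<in>{e1}. if v \<in> e then if v = z1 then w else 0 else 0)"
      using tpos e1_def by auto
    show "\<forall>v\<in>V2. (\<Sum>q\<in>{(z1, y2)}. if snd q = v then t else 0) \<le>
       (\<Sum>e\<in>{e2}. if v \<in> e then if v = y2 then t else if v = z2 then r else 0 else 0)"
      using tpos e2_def by auto
    show "(\<Sum>q\<in>{(z1, y2)}. s) \<le> 1" using vals by simp
    show "s / real c \<le> (\<Sum>q\<in>{(z1, y2)}. s + w + t) - (\<Sum>e\<in>{e1}. \<Sum>v\<in>e. if v = z1 then w else 0) -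
       (\<Sum>e\<in>{e2}. \<Sum>v\<in>e. if v = y2 then t else if v = z2 then r else 0)"
      using gain d1 d2 by (simp add: e1_def e2_def)
  qed
qed

lemma c_facts: "real c * real c \<ge> 2 * real c" "real c * real c \<ge> real a + real b"
  "real b * real c \<ge> real a" 
proof -
  show 1: "real c * real c \<ge> 2 * real c" using rf by (intro mult_right_mono) auto
  then show "real c * real c \<ge> real a + real b" using rf by linarith
  have "real b * real c \<ge> real b * 1" using rf by (intro mult_left_mono) auto
  then show "real b * real c \<ge> real a" using rf by linarith
qed

lemma config_BBCA:
  assumes ab: "a < b" and bc: "b < c" and y1: "y1 \<in> B1" and y2: "y2 \<in> B2" and uE: "{u, y1, y2} \<in> E"
    and z1: "z1 \<in> C1" and x2: "x2 \<in> A2" and uE': "{u, z1, x2} \<in> E"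
  shows "GOAL a b c (insert u (V1 \<union> V2)) E"
proof -
  obtain x1 z2 where p: "x1 \<in> A1" "z2 \<in> C2" using ex_parts by blast
  define ea where "ea = real a * s / real c"
  define eb where "eb = real b * s / real c"
  define e1 where "e1 = {x1,y1,z1}"
  define e2 where "e2 = {x2,y2,z2}"
  define dA where "dA = (\<lambda>(e::'v set) v. if v = y1 then eb else if v = z1 then s else 0)"
  define dB where "dB = (\<lambda>(e::'v set) v. if v = x2 then ea else if v = y2 then eb else if v = z2 then s else 0)"
  define PU where "PU = (\<lambda>q. if q = (y1,y2) then s else eb)"
  define PV where "PV = (\<lambda>q. if q = (y1,y2) then eb else s)"
  define PW where "PW = (\<lambda>q. if q = (y1,y2) then eb else ea)"
  have e1E: "e1 \<in> E1" and e2E: "e2 \<in> E2" unfolding e1_def e2_def complete3partite_def using p y1 z1 x2 y2 by blast+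
  have d1: "x1 \<noteq> y1" "x1 \<noteq> z1" "y1 \<noteq> z1" using p y1 z1 dj1 by auto
  have d2: "x2 \<noteq> y2" "x2 \<noteq> z2" "y2 \<noteq> z2" using p y2 x2 dj2 by auto
  have ra: "real a \<ge> 1" and rab: "real b \<ge> real a + 1" and rbc: "real c \<ge> real b + 1"
    and spos: "s > 0" using rf ab bc by auto
  have std1: "std x1 = real a * s" "std y1 = real b * s" "std z1 = real c * s"
    using std_C std_A std_B z1 p y1 by auto
  have std2: "std x2 = real a * s" "std y2 = real b * s" "std z2 = real c * s"
    using std_C std_A std_B y2 p x2 by auto
  have pos: "ea > 0" "eb > 0" unfolding ea_def eb_def using rf by auto
  have c_bma: "real c * (real b - real a) \<ge> real b"
  proof -
    have "real c * (real b - real a) \<ge> real c * 1" using rab rf by (intro mult_left_mono) auto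
    then show ?thesis using rf by linarith
  qed
  have ea_le: "ea \<le> eb" "eb \<le> s" unfolding ea_def eb_def using rf by (auto simp: field_simps intro: smul)
  have okA: "tri_ok a b c (real a * s) (real b * s - eb) (real c * s - s)"
  proof -
    have "(real b + real a * real c) * s \<le> (real b * real c) * s" using c_bma by (intro smul) (simp add: algebra_simps)
    then have r1: "real a * s \<le> real b * s - eb" unfolding eb_def using rf by (simp add: field_simps)
    have "(real b * (real c - 1)) * s \<le> (real c * (real c - 1)) * s" using rf by (intro smul mult_right_mono) auto
    then have r2: "real b * s - eb \<le> real c * s - s" unfolding eb_def using rf by (simp add: field_simps)
    have r3: "(real b * s - eb) / real b \<le> real a * s / real a" unfolding eb_def using rf spos by (simp add: field_simps)
    have r4: "(real c * s - s) / real c \<le> (real b * s - eb) / real b" unfolding eb_def using rf by (simp add: field_simps)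
    show ?thesis unfolding tri_ok_def ok3_def using r1 r2 r3 r4 by blast
  qed
  have okB: "tri_ok a b c (real a * s - ea) (real b * s - eb) (real c * s - s)"
  proof -
    have "s / real c \<le> s" using rf by (simp add: divide_le_eq)
    then have "real a * (s - s / real c) \<le> real b * (s - s / real c)" using rf by (intro mult_right_mono) auto
    then have r1: "real a * s - ea \<le> real b * s - eb" unfolding ea_def eb_def by (simp add: algebra_simps)
    have r2: "real b * s - eb \<le> real c * s - s" 
    proof -
      have "(real b * (real c - 1)) * s \<le> (real c * (real c - 1)) * s" using rf by (intro smul mult_right_mono) auto
      then show ?thesis unfolding eb_def using rf by (simp add: field_simps)
    qed
    have r3: "(real b * s - eb) / real b \<le> (real a * s - ea) / real a" unfolding ea_def eb_def using rf by (simp add: field_simps)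
    have r4: "(real c * s - s) / real c \<le> (real b * s - eb) / real b" unfolding eb_def using rf by (simp add: field_simps)
    show ?thesis unfolding tri_ok_def ok3_def using r1 r2 r3 r4 by blast
  qed
  have okQ1: "tri_ok a b c s eb eb"
  proof -
    have "ok3 a b c eb eb s" unfolding ok3_def using ea_le rf pos by (auto simp: eb_def field_simps)
    then show ?thesis unfolding tri_ok_def by blast
  qed
  have okQ2: "tri_ok a b c eb s ea"
  proof -
    have "ok3 a b c ea eb s" unfolding ok3_def using ea_le rf pos by (auto simp: eb_def ea_def field_simps)
    then show ?thesis unfolding tri_ok_def by blast
  qed
  have vals: "mm \<le> real b * s - eb" "mm \<le> real c * s - s" "mm \<le> real a * s - ea"
    "mm \<le> s" "mm \<le> ea" "mm \<le> eb" "s \<le> 1" "s + eb \<le> 1"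
  proof -
    have "(real a + real b) * s \<le> (real b * real c) * s"
    proof (rule smul)
      have "real b * real c \<ge> real b * 2" using rf by (intro mult_left_mono) auto
      then show "real a + real b \<le> real b * real c" using rf by linarith
    qed
    then show "mm \<le> real b * s - eb" unfolding eb_def using rf by (simp add: field_simps)
    have "(real a + real c) * s \<le> (real c * real c) * s" using c_facts rf by (intro smul) linarith
    then show "mm \<le> real c * s - s" using rf by (simp add: field_simps)
    have "(2 * real a) * s \<le> (real a * real c) * s" using rf by (intro smul mult_left_mono[of 2 "real c" "real a", simplified mult.commute]) auto
    then show "mm \<le> real a * s - ea" unfolding ea_def using rf by (simp add: field_simps)
    show "mm \<le> s" using rf by (simp add: field_simps)
    show "mm \<le> ea" unfolding ea_def by simp
    show "mm \<le> eb" using ea_le unfolding ea_def by simp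
    show "s \<le> 1" "s + eb \<le> 1" using s_half ea_le by auto
  qed
  have gain: "s / real c \<le> eb" unfolding eb_def using rf by (simp add: divide_right_mono)
  have qd: "(y1, y2) \<noteq> (z1, x2)" using d1 by simp
  show ?thesis
  proof (rule generic[where MA="{e1}" and MB="{e2}" and dA=dA and dB=dB and Q="{(y1,y2),(z1,x2)}"
       and PU=PU and PV=PV and PW=PW])
    show "{e1} \<subseteq> E1" "{e2} \<subseteq> E2" "finite {(y1,y2),(z1,x2)}" using e1E e2E by auto
    show "{(y1,y2),(z1,x2)} \<subseteq> V1 \<times> V2" using y1 y2 z1 x2 by auto
    show "\<forall>q\<in>{(y1,y2),(z1,x2)}. {u, fst q, snd q} \<in> E" using uE uE' by simp
    show "\<forall>e\<in>{e1}. \<forall>x\<in>A1. \<forall>y\<in>B1. \<forall>z\<in>C1. e = {x, y, z} \<longrightarrow>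
      tri_ok a b c (std x - dA e x) (std y - dA e y) (std z - dA e z)"
      by (rule adm_one[where d=dA]) (use p y1 z1 dj1 d1 std1 okA e1_def in \<open>auto simp: dA_def\<close>)
    show "\<forall>e\<in>{e2}. \<forall>x\<in>A2. \<forall>y\<in>B2. \<forall>z\<in>C2. e = {x, y, z} \<longrightarrow>
      tri_ok a b c (std x - dB e x) (std y - dB e y) (std z - dB e z)"
      by (rule adm_one[where d=dB]) (use p x2 y2 dj2 d2 std2 okB e2_def in \<open>auto simp: dB_def\<close>)
    show "\<forall>e\<in>{e1}. \<forall>v\<in>e. 0 \<le> dA e v \<and> mm \<le> std v - dA e v"
      unfolding dA_def by (rule val_ok) (use pos spos vals std1 d1 in \<open>auto simp: e1_def\<close>)
    show "\<forall>e\<in>{e2}. \<forall>v\<in>e. 0 \<le> dB e v \<and> mm \<le> std v - dB e v"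
      unfolding dB_def by (rule val_ok) (use pos spos vals std2 d2 in \<open>auto simp: e2_def\<close>)
    show "\<forall>q\<in>{(y1,y2),(z1,x2)}. mm \<le> PU q \<and> PU q \<le> 1 \<and> mm \<le> PV q \<and> PV q \<le> 1 \<and> mm \<le> PW q \<and> PW q \<le> 1 \<and>
        tri_ok a b c (PU q) (PV q) (PW q)"
      using vals okQ1 okQ2 qd ea_le unfolding PU_def PV_def PW_def by auto
    show "\<forall>v\<in>V1. (\<Sum>q\<in>{(y1,y2),(z1,x2)}. if fst q = v then PV q else 0) \<le> (\<Sum>e\<in>{e1}. if v \<in> e then dA e v else 0)"
      using pos spos qd d1 by (auto simp: e1_def dA_def PV_def)
    show "\<forall>v\<in>V2. (\<Sum>q\<in>{(y1,y2),(z1,x2)}. if snd q = v then PW q else 0) \<le> (\<Sum>e\<in>{e2}. if v \<in> e then dB e v else 0)"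
      using pos spos qd d2 by (auto simp: e2_def dB_def PW_def)
    show "(\<Sum>q\<in>{(y1,y2),(z1,x2)}. PU q) \<le> 1" using vals qd d1 by (simp add: PU_def)
    show "s / real c \<le> (\<Sum>q\<in>{(y1,y2),(z1,x2)}. PU q + PV q + PW q) - (\<Sum>e\<in>{e1}. \<Sum>v\<in>e. dA e v) -
       (\<Sum>e\<in>{e2}. \<Sum>v\<in>e. dB e v)"
      using gain d1 d2 qd by (simp add: e1_def e2_def dA_def dB_def PU_def PV_def PW_def sum3)
  qed
qed

lemma adm_two:
  assumes "\<forall>e\<in>{e1}. \<forall>x\<in>A. \<forall>y\<in>B. \<forall>z\<in>C. e = {x,y,z} \<longrightarrow> tri_ok a b c (std x - d e x) (std y - d e y) (std z - d e z)"
    "\<forall>e\<in>{e2}. \<forall>x\<in>A. \<forall>y\<in>B. \<forall>z\<in>C. e = {x,y,z} \<longrightarrow> tri_ok a b c (std x - d e x) (std y - d e y) (std z - d e z)"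
  shows "\<forall>e\<in>{e1,e2}. \<forall>x\<in>A. \<forall>y\<in>B. \<forall>z\<in>C. e = {x,y,z} \<longrightarrow> tri_ok a b c (std x - d e x) (std y - d e y) (std z - d e z)"
  using assms by blast

lemma config_XZYZ_core:
  assumes ab: "a = b" and bc: "b < c" and x1: "x1 \<in> A1" and y1: "y1 \<in> B1"
    and z2: "z2 \<in> C2" and z2': "z2' \<in> C2" and uE: "{u, x1, z2} \<in> E" and uE': "{u, y1, z2'} \<in> E"
    and MB: "MB \<subseteq> E2"
    and admB: "\<forall>e\<in>MB. \<forall>x\<in>A2. \<forall>y\<in>B2. \<forall>z\<in>C2. e = {x,y,z} \<longrightarrow> tri_ok a b c (std x - dB e x) (std y - dB e y) (std z - dB e z)"
    and valB: "\<forall>e\<in>MB. \<forall>v\<in>e. 0 \<le> dB e v \<and> mm \<le> std v - dB e v"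
    and loadB: "\<forall>w\<in>V2. (if z2 = w then mm else 0) + (if z2' = w then mm else 0) \<le> (\<Sum>e\<in>MB. if w \<in> e then dB e w else 0)"
    and sumB: "(\<Sum>e\<in>MB. \<Sum>v\<in>e. dB e v) = 2 * mm"
  shows "GOAL a b c (insert u (V1 \<union> V2)) E"
proof -
  obtain z1 where p: "z1 \<in> C1" using ex_parts by blast
  define t where "t = mm"
  define e1 where "e1 = {x1,y1,z1}"
  define dA where "dA = (\<lambda>(e::'v set) v. if v = x1 then t else if v = y1 then t else if v = z1 then s else 0)"
  have e1E: "e1 \<in> E1" unfolding e1_def complete3partite_def using p x1 y1 by blast
  have d1: "x1 \<noteq> y1" "x1 \<noteq> z1" "y1 \<noteq> z1" using p x1 y1 dj1 by auto
  have rab: "real b = real a" using ab by simp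
  have spos: "s > 0" using rf by auto
  have std1: "std x1 = real a * s" "std y1 = real a * s" "std z1 = real c * s"
    using std_C std_A std_B p x1 y1 ab by auto
  have pos: "t > 0" unfolding t_def using std_bounds by auto
  have tle: "t \<le> s" unfolding t_def using rf by (simp add: field_simps)
  have okA: "tri_ok a b c (real a * s - t) (real a * s - t) (real c * s - s)"
  proof -
    have "real a / real c \<le> 1" using rf by simp
    then have "real a * (s - s / real c) \<le> real c * (s - s / real c)" using rf
      by (intro mult_right_mono) (auto simp: divide_le_eq)
    then have r2: "real a * s - t \<le> real c * s - s" unfolding t_def using rf by (simp add: algebra_simps)
    have r3: "(real a * s - t) / real b \<le> (real a * s - t) / real a" using rab by simp
    have r4: "(real c * s - s) / real c \<le> (real a * s - t) / real b" unfolding t_def using rf rab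
      by (simp add: field_simps)
    show ?thesis unfolding tri_ok_def ok3_def using r2 r3 r4 by auto
  qed
  have okQ: "tri_ok a b c s t t"
  proof -
    have "ok3 a b c t t s" unfolding ok3_def t_def using tle rf rab spos by (auto simp: field_simps t_def)
    then show ?thesis unfolding tri_ok_def by blast
  qed
  have vals: "mm \<le> real a * s - t" "mm \<le> real c * s - s" "mm \<le> s" "mm \<le> t" "s \<le> 1" "t \<le> 1" "2 * s \<le> 1"
  proof -
    have "(2 * real a) * s \<le> (real a * real c) * s" using rf
      by (intro smul) (simp add: mult.commute mult_left_mono)
    then show "mm \<le> real a * s - t" unfolding t_def using rf by (simp add: field_simps)
    have "(real a + real c) * s \<le> (real c * real c) * s" using c_facts rf by (intro smul) linarith
    then show "mm \<le> real c * s - s" using rf by (simp add: field_simps)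
    show "mm \<le> s" using rf by (simp add: field_simps)
    show "mm \<le> t" unfolding t_def by simp
    show "s \<le> 1" "2 * s \<le> 1" using s_half by auto
    show "t \<le> 1" using tle s_half by simp
  qed
  have qd: "(x1, z2) \<noteq> (y1, z2')" "(y1, z2') \<noteq> (x1, z2)" using d1 by auto
  show ?thesis
  proof (rule generic[where MA="{e1}" and MB=MB and dA=dA and dB=dB and Q="{(x1,z2),(y1,z2')}"
       and PU="\<lambda>_. s" and PV="\<lambda>_. t" and PW="\<lambda>_. t"])
    show "{e1} \<subseteq> E1" "MB \<subseteq> E2" "finite {(x1,z2),(y1,z2')}" using e1E MB by auto
    show "{(x1,z2),(y1,z2')} \<subseteq> V1 \<times> V2" using x1 y1 z2 z2' by auto
    show "\<forall>q\<in>{(x1,z2),(y1,z2')}. {u, fst q, snd q} \<in> E" using uE uE' by simp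
    show "\<forall>e\<in>{e1}. \<forall>x\<in>A1. \<forall>y\<in>B1. \<forall>z\<in>C1. e = {x, y, z} \<longrightarrow>
      tri_ok a b c (std x - dA e x) (std y - dA e y) (std z - dA e z)"
      by (rule adm_one[where d=dA]) (use p x1 y1 dj1 d1 std1 okA e1_def in \<open>auto simp: dA_def\<close>)
    show "\<forall>e\<in>MB. \<forall>x\<in>A2. \<forall>y\<in>B2. \<forall>z\<in>C2. e = {x, y, z} \<longrightarrow>
      tri_ok a b c (std x - dB e x) (std y - dB e y) (std z - dB e z)" by (rule admB)
    show "\<forall>e\<in>{e1}. \<forall>v\<in>e. 0 \<le> dA e v \<and> mm \<le> std v - dA e v"
      unfolding dA_def by (rule val_ok) (use pos spos vals std1 d1 in \<open>auto simp: e1_def\<close>)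
    show "\<forall>e\<in>MB. \<forall>v\<in>e. 0 \<le> dB e v \<and> mm \<le> std v - dB e v" by (rule valB)
    show "\<forall>q\<in>{(x1,z2),(y1,z2')}. mm \<le> s \<and> s \<le> 1 \<and> mm \<le> t \<and> t \<le> 1 \<and> mm \<le> t \<and> t \<le> 1 \<and>
        tri_ok a b c s t t"
      using vals okQ by auto
    show "\<forall>v\<in>V1. (\<Sum>q\<in>{(x1,z2),(y1,z2')}. if fst q = v then t else 0) \<le> (\<Sum>e\<in>{e1}. if v \<in> e then dA e v else 0)"
      using pos spos qd d1 by (auto simp: e1_def dA_def)
    show "\<forall>v\<in>V2. (\<Sum>q\<in>{(x1,z2),(y1,z2')}. if snd q = v then t else 0) \<le> (\<Sum>e\<in>MB. if v \<in> e then dB e v else 0)"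
      using loadB qd unfolding t_def by simp
    show "(\<Sum>q\<in>{(x1,z2),(y1,z2')}. s) \<le> 1" using vals qd by simp
    show "s / real c \<le> (\<Sum>q\<in>{(x1,z2),(y1,z2')}. s + t + t) - (\<Sum>e\<in>{e1}. \<Sum>v\<in>e. dA e v) -
       (\<Sum>e\<in>MB. \<Sum>v\<in>e. dB e v)"
    proof -
      have "(\<Sum>e\<in>{e1}. \<Sum>v\<in>e. dA e v) = 2 * t + s" using d1 by (simp add: e1_def dA_def sum3)
      moreover have "s / real c \<le> s" using rf spos by (simp add: divide_le_eq)
      ultimately show ?thesis using qd sumB unfolding t_def by simp
    qed
  qed
qed

lemma okCred: assumes "b < c"
  shows "tri_ok a b c (real a * s) (real b * s) (real c * s - mm)" "mm \<le> real c * s - mm"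
proof -
  have cb1: "real c \<ge> real b + 1" using assms by simp
  have t_le: "mm \<le> (real c - real b) * s"
  proof -
    have "real a / real c \<le> 1" using rf by simp
    then have "real a / real c * s \<le> 1 * s" using rf by (intro mult_right_mono) auto
    also have "\<dots> \<le> (real c - real b) * s" using cb1 rf by simp
    finally show ?thesis by simp
  qed
  have r1: "real a * s \<le> real b * s" using rf by (intro smul) auto
  have r2: "real b * s \<le> real c * s - mm" using t_le by (simp add: algebra_simps)
  have r3: "real b * s / real b \<le> real a * s / real a" using rf by simp
  have "(real c * s - mm) / real c \<le> s" using std_bounds rf by (simp add: divide_le_eq)
  then have r4: "(real c * s - mm) / real c \<le> real b * s / real b" using rf by simp
  show "tri_ok a b c (real a * s) (real b * s) (real c * s - mm)"
    unfolding tri_ok_def ok3_def using r1 r2 r3 r4 by blast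
  have "(2 * real a) * s \<le> (real c * real c) * s" using c_facts rf by (intro smul) linarith
  then show "mm \<le> real c * s - mm" using rf by (simp add: field_simps)
qed

lemma sum_single: "finite e \<Longrightarrow> z \<in> e \<Longrightarrow> (\<Sum>v\<in>e. if v = z then k else 0) = (k::real)"
  by (simp add: sum.delta)

lemma config_XZYZ:
  assumes ab: "a = b" and bc: "b < c" and x1: "x1 \<in> A1" and y1: "y1 \<in> B1"
    and z2: "z2 \<in> C2" and z2': "z2' \<in> C2" and uE: "{u, x1, z2} \<in> E" and uE': "{u, y1, z2'} \<in> E"
  shows "GOAL a b c (insert u (V1 \<union> V2)) E"
proof -
  obtain x2 y2 where p: "x2 \<in> A2" "y2 \<in> B2" using ex_parts by blast
  have stdz: "std v = real c * s" if "v \<in> C2" for v using std_C that by auto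
  have stdx: "std v = real a * s" if "v \<in> A2" for v using std_A that by auto
  have stdy: "std v = real b * s" if "v \<in> B2" for v using std_B that by auto
  show ?thesis
  proof (cases "\<exists>xa ya xb yb. xa \<in> A2 \<and> ya \<in> B2 \<and> xb \<in> A2 \<and> yb \<in> B2 \<and> {xa,ya,z2} \<noteq> {xb,yb,z2'}")
    case True
    then obtain xa ya xb yb where q: "xa \<in> A2" "ya \<in> B2" "xb \<in> A2" "yb \<in> B2" "{xa,ya,z2} \<noteq> {xb,yb,z2'}" by blast
    define e2 where "e2 = {xa,ya,z2}"
    define e2' where "e2' = {xb,yb,z2'}"
    define dB where "dB = (\<lambda>e v. if e = e2 then (if v = z2 then mm else 0) else if e = e2' then (if v = z2' then mm else 0) else 0)"
    have ne: "e2 \<noteq> e2'" using q unfolding e2_def e2'_def by simp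
    have dd: "xa \<noteq> ya" "xa \<noteq> z2" "ya \<noteq> z2" "xb \<noteq> yb" "xb \<noteq> z2'" "yb \<noteq> z2'" using q z2 z2' dj2 by auto
    have E2s: "e2 \<in> E2" "e2' \<in> E2" unfolding e2_def e2'_def complete3partite_def using q z2 z2' by blast+
    show ?thesis
    proof (rule config_XZYZ_core[OF ab bc x1 y1 z2 z2' uE uE', where MB="{e2,e2'}" and dB=dB])
      show "{e2, e2'} \<subseteq> E2" using E2s by auto
      show "\<forall>e\<in>{e2, e2'}. \<forall>x\<in>A2. \<forall>y\<in>B2. \<forall>z\<in>C2. e = {x, y, z} \<longrightarrow>
          tri_ok a b c (std x - dB e x) (std y - dB e y) (std z - dB e z)"
      proof (rule adm_two)
        show "\<forall>e\<in>{e2}. \<forall>x\<in>A2. \<forall>y\<in>B2. \<forall>z\<in>C2. e = {x, y, z} \<longrightarrow>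
          tri_ok a b c (std x - dB e x) (std y - dB e y) (std z - dB e z)"
          by (rule adm_one[where d=dB]) (use q z2 dj2 dd okCred[OF bc] stdz stdx stdy e2_def in \<open>auto simp: dB_def\<close>)
        show "\<forall>e\<in>{e2'}. \<forall>x\<in>A2. \<forall>y\<in>B2. \<forall>z\<in>C2. e = {x, y, z} \<longrightarrow>
          tri_ok a b c (std x - dB e x) (std y - dB e y) (std z - dB e z)"
          by (rule adm_one[where d=dB]) (use q z2' dj2 dd ne okCred[OF bc] stdz stdx stdy e2'_def in \<open>auto simp: dB_def\<close>)
      qed
      show "\<forall>e\<in>{e2, e2'}. \<forall>v\<in>e. 0 \<le> dB e v \<and> mm \<le> std v - dB e v"
        using ne std_bounds okCred(2)[OF bc] stdz z2 z2' by (auto simp: dB_def)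
      show "\<forall>w\<in>V2. (if z2 = w then mm else 0) + (if z2' = w then mm else 0) \<le> (\<Sum>e\<in>{e2, e2'}. if w \<in> e then dB e w else 0)"
      proof
        fix w assume "w \<in> V2"
        have ss: "(\<Sum>e\<in>{e2,e2'}. if w \<in> e then dB e w else 0) = (if w \<in> e2 then dB e2 w else 0) + (if w \<in> e2' then dB e2' w else 0)"
          using ne by simp
        have "dB e2 w = (if w = z2 then mm else 0)" "dB e2' w = (if w = z2' then mm else 0)" using ne by (auto simp: dB_def)
        moreover have "z2 \<in> e2" "z2' \<in> e2'" by (simp_all add: e2_def e2'_def)
        ultimately show "(if z2 = w then mm else 0) + (if z2' = w then mm else 0) \<le> (\<Sum>e\<in>{e2, e2'}. if w \<in> e then dB e w else 0)"
          unfolding ss by auto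
      qed
      show "(\<Sum>e\<in>{e2, e2'}. \<Sum>v\<in>e. dB e v) = 2 * mm"
      proof -
        have "(\<Sum>v\<in>e2. dB e2 v) = mm" unfolding dB_def using sum_single[of e2 z2 mm] by (simp add: e2_def)
        moreover have "(\<Sum>v\<in>e2'. dB e2' v) = mm" unfolding dB_def using ne sum_single[of e2' z2' mm] by (simp add: e2'_def)
        ultimately show ?thesis using ne by simp
      qed
    qed
  next
    case False
    then have "{x2,y2,z2} = {x2,y2,z2'}" using p by blast
    then have zz: "z2 = z2'" using part_eq[of x2 y2 z2 x2 y2 z2' A2 B2 C2] dj2 p z2 z2' by blast
    have a1: "a = 1"
    proof (rule ccontr)
      assume "a \<noteq> 1"
      then have "card A2 \<ge> 2" using cards abc by auto
      then obtain x2' where "x2' \<in> A2" "x2' \<noteq> x2" using p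
        by (metis card_le_Suc0_iff_eq fin(4) not_less_eq_eq numeral_2_eq_2)
      moreover have "{x2,y2,z2} \<noteq> {x2',y2,z2'}"
        using part_eq[of x2 y2 z2 x2' y2 z2' A2 B2 C2] dj2 p z2 z2' calculation by blast
      ultimately show False using False p by blast
    qed
    have b1: "b = 1" using a1 ab by simp
    define e2 where "e2 = {x2,y2,z2}"
    define dB where "dB = (\<lambda>(e::'v set) v. if v = z2 then 2 * mm else 0)"
    have dd: "x2 \<noteq> y2" "x2 \<noteq> z2" "y2 \<noteq> z2" using p z2 dj2 by auto
    have E2s: "e2 \<in> E2" unfolding e2_def complete3partite_def using p z2 by blast
    have spos: "s > 0" using rf by simp
    have mms: "mm = s / real c" using a1 by simp
    have c2: "real c \<ge> 2" using rf by simp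
    have key: "s + 2 * mm \<le> real c * s" "3 * mm \<le> real c * s"
    proof -
      have "real c * real c \<ge> 2 * real c" using c_facts by simp
      then have "(real c + 2) * s \<le> (real c * real c) * s" using c2 by (intro smul) linarith
      then show "s + 2 * mm \<le> real c * s" unfolding mms using c2 by (simp add: field_simps)
      have "(3::real) * s \<le> (real c * real c) * s" using c2 \<open>real c * real c \<ge> 2 * real c\<close> by (intro smul) linarith
      then show "3 * mm \<le> real c * s" unfolding mms using c2 by (simp add: field_simps)
    qed
    have okB: "tri_ok a b c (real a * s) (real b * s) (real c * s - 2 * mm)"
    proof -
      have "ok3 a b c (real a * s) (real b * s) (real c * s - 2 * mm)"
        unfolding ok3_def using a1 b1 key spos c2 mms std_bounds(3) by (auto simp: field_simps)
      then show ?thesis unfolding tri_ok_def by blast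
    qed
    show ?thesis
    proof (rule config_XZYZ_core[OF ab bc x1 y1 z2 z2' uE uE', where MB="{e2}" and dB=dB])
      show "{e2} \<subseteq> E2" using E2s by auto
      show "\<forall>e\<in>{e2}. \<forall>x\<in>A2. \<forall>y\<in>B2. \<forall>z\<in>C2. e = {x, y, z} \<longrightarrow>
          tri_ok a b c (std x - dB e x) (std y - dB e y) (std z - dB e z)"
        by (rule adm_one[where d=dB]) (use p z2 dj2 dd okB stdz stdx stdy e2_def in \<open>auto simp: dB_def\<close>)
      show "\<forall>e\<in>{e2}. \<forall>v\<in>e. 0 \<le> dB e v \<and> mm \<le> std v - dB e v"
      proof (intro ballI)
        fix e v assume "e \<in> {e2}" "v \<in> e"
        have k3: "mm \<le> real c * s - 2 * mm" using key(2) by (smt (verit))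
        show "0 \<le> dB e v \<and> mm \<le> std v - dB e v"
        proof (cases "v = z2")
          case True
          then show ?thesis unfolding dB_def using k3 stdz[OF z2] std_bounds(3) by simp
        next
          case False
          then show ?thesis unfolding dB_def using std_bounds(1)[of v] by simp
        qed
      qed
      show "\<forall>w\<in>V2. (if z2 = w then mm else 0) + (if z2' = w then mm else 0) \<le> (\<Sum>e\<in>{e2}. if w \<in> e then dB e w else 0)"
        using zz std_bounds by (auto simp: dB_def e2_def)
      show "(\<Sum>e\<in>{e2}. \<Sum>v\<in>e. dB e v) = 2 * mm"
        unfolding dB_def using sum_single[of e2 z2 "2*mm"] by (simp add: e2_def)
    qed
  qed
qed

lemma config_PM:
  assumes ab: "a = b" and bc: "b < c" and x1: "x1 \<in> A1" and x2: "x2 \<in> A2" and uE1: "{u, x1, x2} \<in> E"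
    and y1: "y1 \<in> B1" and z2: "z2 \<in> C2" and uE2: "{u, y1, z2} \<in> E"
    and z1: "z1 \<in> C1" and y2: "y2 \<in> B2" and uE3: "{u, z1, y2} \<in> E"
  shows "GOAL a b c (insert u (V1 \<union> V2)) E"
proof -
  define t where "t = mm"
  define e1 where "e1 = {x1,y1,z1}"
  define e2 where "e2 = {x2,y2,z2}"
  define dA where "dA = (\<lambda>(e::'v set) v. if v = x1 then t else if v = y1 then t else if v = z1 then s else 0)"
  define dB where "dB = (\<lambda>(e::'v set) v. if v = x2 then t else if v = y2 then t else if v = z2 then s else 0)"
  define PV where "PV = (\<lambda>q. if q = (z1,y2) then s else t)"
  define PW where "PW = (\<lambda>q. if q = (y1,z2) then s else t)"
  have e1E: "e1 \<in> E1" unfolding e1_def complete3partite_def using x1 y1 z1 by blast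
  have e2E: "e2 \<in> E2" unfolding e2_def complete3partite_def using x2 y2 z2 by blast
  have d1: "x1 \<noteq> y1" "x1 \<noteq> z1" "y1 \<noteq> z1" using z1 x1 y1 dj1 by auto
  have d2: "x2 \<noteq> y2" "x2 \<noteq> z2" "y2 \<noteq> z2" using z2 x2 y2 dj2 by auto
  have rab: "real b = real a" using ab by simp
  have spos: "s > 0" using rf by auto
  have std1: "std x1 = real a * s" "std y1 = real a * s" "std z1 = real c * s"
    using std_C std_A std_B z1 x1 y1 ab by auto
  have std2: "std x2 = real a * s" "std y2 = real a * s" "std z2 = real c * s"
    using std_C std_A std_B z2 x2 y2 ab by auto
  have pos: "t > 0" unfolding t_def using std_bounds by auto
  have tle: "t \<le> s" unfolding t_def using rf by (simp add: field_simps)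
  have okA: "tri_ok a b c (real a * s - t) (real a * s - t) (real c * s - s)"
  proof -
    have "real a / real c \<le> 1" using rf by simp
    then have "real a * (s - s / real c) \<le> real c * (s - s / real c)" using rf
      by (intro mult_right_mono) (auto simp: divide_le_eq)
    then have r2: "real a * s - t \<le> real c * s - s" unfolding t_def using rf by (simp add: algebra_simps)
    have r3: "(real a * s - t) / real b \<le> (real a * s - t) / real a" using rab by simp
    have r4: "(real c * s - s) / real c \<le> (real a * s - t) / real b" unfolding t_def using rf rab
      by (simp add: field_simps)
    show ?thesis unfolding tri_ok_def ok3_def using r2 r3 r4 by auto
  qed
  have ok1: "ok3 a b c t t s" unfolding ok3_def t_def using tle rf rab spos by (auto simp: field_simps t_def)
  have okQ: "tri_ok a b c t t t" "tri_ok a b c t t s" "tri_ok a b c t s t"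
  proof -
    have "ok3 a b c t t t" unfolding ok3_def using pos rf rab by (auto simp: field_simps)
    then show "tri_ok a b c t t t" unfolding tri_ok_def by blast
    show "tri_ok a b c t t s" using ok1 unfolding tri_ok_def by blast
    show "tri_ok a b c t s t" using ok1 unfolding tri_ok_def by blast
  qed
  have vals: "mm \<le> real a * s - t" "mm \<le> real c * s - s" "mm \<le> s" "mm \<le> t" "s \<le> 1" "t \<le> 1" "3 * t \<le> 1"
  proof -
    have "(2 * real a) * s \<le> (real a * real c) * s" using rf
      by (intro smul) (simp add: mult.commute mult_left_mono)
    then show "mm \<le> real a * s - t" unfolding t_def using rf by (simp add: field_simps)
    have "(real a + real c) * s \<le> (real c * real c) * s" using c_facts rf by (intro smul) linarith
    then show "mm \<le> real c * s - s" using rf by (simp add: field_simps)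
    show "mm \<le> s" using rf by (simp add: field_simps)
    show "mm \<le> t" unfolding t_def by simp
    show "s \<le> 1" using s_half by auto
    show "t \<le> 1" using tle s_half by simp
    have "real b * real c * real c \<ge> 1 * 2 * 2" using rf by (intro mult_mono) auto
    then have "t \<le> 1/4" unfolding t_def sv_def using rf by (simp add: field_simps)
    then show "3 * t \<le> 1" by simp
  qed
  have qd: "(x1,x2) \<noteq> (y1,z2)" "(x1,x2) \<noteq> (z1,y2)" "(y1,z2) \<noteq> (z1,y2)" using d1 by auto
  let ?Q = "{(x1,x2),(y1,z2),(z1,y2)}"
  show ?thesis
  proof (rule generic[where MA="{e1}" and MB="{e2}" and dA=dA and dB=dB and Q="?Q"
       and PU="\<lambda>_. t" and PV=PV and PW=PW])
    show "{e1} \<subseteq> E1" "{e2} \<subseteq> E2" "finite ?Q" using e1E e2E by auto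
    show "?Q \<subseteq> V1 \<times> V2" using x1 y1 z1 x2 y2 z2 by auto
    show "\<forall>q\<in>?Q. {u, fst q, snd q} \<in> E" using uE1 uE2 uE3 by simp
    show "\<forall>e\<in>{e1}. \<forall>x\<in>A1. \<forall>y\<in>B1. \<forall>z\<in>C1. e = {x, y, z} \<longrightarrow>
      tri_ok a b c (std x - dA e x) (std y - dA e y) (std z - dA e z)"
      by (rule adm_one[where d=dA]) (use x1 y1 z1 dj1 d1 std1 okA e1_def in \<open>auto simp: dA_def\<close>)
    show "\<forall>e\<in>{e2}. \<forall>x\<in>A2. \<forall>y\<in>B2. \<forall>z\<in>C2. e = {x, y, z} \<longrightarrow>
      tri_ok a b c (std x - dB e x) (std y - dB e y) (std z - dB e z)"
      by (rule adm_one[where d=dB]) (use x2 y2 z2 dj2 d2 std2 okA e2_def in \<open>auto simp: dB_def\<close>)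
    show "\<forall>e\<in>{e1}. \<forall>v\<in>e. 0 \<le> dA e v \<and> mm \<le> std v - dA e v"
      unfolding dA_def by (rule val_ok) (use pos spos vals std1 d1 in \<open>auto simp: e1_def\<close>)
    show "\<forall>e\<in>{e2}. \<forall>v\<in>e. 0 \<le> dB e v \<and> mm \<le> std v - dB e v"
      unfolding dB_def by (rule val_ok) (use pos spos vals std2 d2 in \<open>auto simp: e2_def\<close>)
    show "\<forall>q\<in>?Q. mm \<le> t \<and> t \<le> 1 \<and> mm \<le> PV q \<and> PV q \<le> 1 \<and> mm \<le> PW q \<and> PW q \<le> 1 \<and>
        tri_ok a b c t (PV q) (PW q)"
      using vals okQ qd d1 d2 unfolding PV_def PW_def by auto
    show "\<forall>v\<in>V1. (\<Sum>q\<in>?Q. if fst q = v then PV q else 0) \<le> (\<Sum>e\<in>{e1}. if v \<in> e then dA e v else 0)"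
      using pos spos qd d1 d2 by (auto simp: e1_def dA_def PV_def)
    show "\<forall>v\<in>V2. (\<Sum>q\<in>?Q. if snd q = v then PW q else 0) \<le> (\<Sum>e\<in>{e2}. if v \<in> e then dB e v else 0)"
      using pos spos qd d1 d2 by (auto simp: e2_def dB_def PW_def)
    show "(\<Sum>q\<in>?Q. t) \<le> 1" using vals qd by simp
    show "s / real c \<le> (\<Sum>q\<in>?Q. t + PV q + PW q) - (\<Sum>e\<in>{e1}. \<Sum>v\<in>e. dA e v) -
       (\<Sum>e\<in>{e2}. \<Sum>v\<in>e. dB e v)"
    proof -
      have "(\<Sum>e\<in>{e1}. \<Sum>v\<in>e. dA e v) = 2 * t + s" using d1 by (simp add: e1_def dA_def sum3)
      moreover have "(\<Sum>e\<in>{e2}. \<Sum>v\<in>e. dB e v) = 2 * t + s" using d2 by (simp add: e2_def dB_def sum3)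
      moreover have "(\<Sum>q\<in>?Q. t + PV q + PW q) = 7 * t + 2 * s" using qd d1 d2 by (simp add: PV_def PW_def)
      moreover have "s / real c \<le> t" unfolding t_def using rf by (simp add: divide_right_mono)
      ultimately show ?thesis using pos by simp
    qed
  qed
qed

lemma okD1: assumes ab: "a < b" and bc: "b = c"
  shows "tri_ok a b c (real a * s) (real b * s - mm) (real c * s - mm)"
    "mm \<le> real b * s - mm" "mm \<le> real c * s - mm"
proof -
  have rab: "real b \<ge> real a + 1" and rbc: "real c = real b" using ab bc by auto
  have spos: "s > 0" using rf by auto
  have "real c * (real b - real a) \<ge> real c * 1" using rab rf by (intro mult_left_mono) auto
  then have "(real a * real c + real a) * s \<le> (real b * real c) * s" using rf by (intro smul) (simp add: algebra_simps)
  then have r1: "real a * s \<le> real b * s - mm" using rf by (simp add: field_simps)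
  have r2: "real b * s - mm \<le> real c * s - mm" using rbc by simp
  have r3: "(real b * s - mm) / real b \<le> real a * s / real a" using rf std_bounds(3) by (simp add: divide_le_eq)
  have r4: "(real c * s - mm) / real c \<le> (real b * s - mm) / real b" using rbc by simp
  show "tri_ok a b c (real a * s) (real b * s - mm) (real c * s - mm)"
    unfolding tri_ok_def ok3_def using r1 r2 r3 r4 by blast
  have "real b * real c \<ge> 2 * real c" using rab rf by (intro mult_right_mono) auto
  then have "(2 * real a) * s \<le> (real b * real c) * s" using rf by (intro smul) linarith
  then show "mm \<le> real b * s - mm" using rf by (simp add: field_simps)
  then show "mm \<le> real c * s - mm" using rbc by simp
qed

lemma okD3: assumes ab: "a < b" and bc: "b = c"
  shows "tri_ok a b c (real a * s) (real b * s - s) (real c * s - s)"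
    "tri_ok a b c (real a * s - mm) (real b * s - s) (real c * s - s)"
    "mm \<le> real b * s - s" "mm \<le> real c * s - s" "mm \<le> real a * s - mm"
    "tri_ok a b c s s s" "tri_ok a b c s mm s" "mm \<le> s" "s \<le> 1" "2 * s \<le> 1"
proof -
  have rab: "real b \<ge> real a + 1" and rbc: "real c = real b" using ab bc by auto
  have spos: "s > 0" using rf by auto
  have "real a * s \<le> (real b - 1) * s" using rab by (intro smul) linarith
  then have r1: "real a * s \<le> real b * s - s" by (simp add: algebra_simps)
  have r2: "real b * s - s \<le> real c * s - s" using rbc by simp
  have r3: "(real b * s - s) / real b \<le> real a * s / real a" using rf spos by (simp add: divide_le_eq)
  have r4: "(real c * s - s) / real c \<le> (real b * s - s) / real b" using rbc by simp
  show "tri_ok a b c (real a * s) (real b * s - s) (real c * s - s)"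
    unfolding tri_ok_def ok3_def using r1 r2 r3 r4 by blast
  have "real a * (s - s / real c) \<le> real b * (s - s / real c)"
    using rf spos by (intro mult_right_mono) (auto simp: divide_le_eq)
  then have q1: "real a * s - mm \<le> real b * s - s" using rbc rf by (simp add: algebra_simps)
  have q3: "(real b * s - s) / real b \<le> (real a * s - mm) / real a" using rf rbc by (simp add: field_simps)
  show "tri_ok a b c (real a * s - mm) (real b * s - s) (real c * s - s)"
    unfolding tri_ok_def ok3_def using q1 r2 q3 r4 by blast
  have "real c * (real b - 1) \<ge> real c * 1" using rab rf by (intro mult_left_mono) auto
  then have "real a * s \<le> (real c * (real b - 1)) * s" using rf by (intro smul) linarith
  then show m1: "mm \<le> real b * s - s" using rf by (simp add: field_simps)
  then show "mm \<le> real c * s - s" using rbc by simp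
  have "(2 * real a) * s \<le> (real a * real c) * s" using rf
    by (intro smul) (simp add: mult.commute mult_left_mono)
  then show "mm \<le> real a * s - mm" using rf by (simp add: field_simps)
  have "ok3 a b c s s s" unfolding ok3_def using rf spos by (auto simp: divide_le_eq field_simps)
  then show "tri_ok a b c s s s" unfolding tri_ok_def by blast
  have "ok3 a b c mm s s" unfolding ok3_def using rf spos rbc by (auto simp: field_simps)
  then show "tri_ok a b c s mm s" unfolding tri_ok_def by blast
  show "mm \<le> s" using rf by (simp add: field_simps)
  show "s \<le> 1" "2 * s \<le> 1" using s_half by auto
qed

lemma config_D1:
  assumes ab: "a < b" and bc: "b = c" and y1: "y1 \<in> B1" and y2: "y2 \<in> B2" and uE1: "{u, y1, y2} \<in> E"
    and z1: "z1 \<in> C1" and z2: "z2 \<in> C2" and uE2: "{u, z1, z2} \<in> E"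
  shows "GOAL a b c (insert u (V1 \<union> V2)) E"
proof -
  obtain x1 x2 where p: "x1 \<in> A1" "x2 \<in> A2" using ex_parts by blast
  define t where "t = mm"
  define e1 where "e1 = {x1,y1,z1}"
  define e2 where "e2 = {x2,y2,z2}"
  define dA where "dA = (\<lambda>(e::'v set) v. if v = y1 then t else if v = z1 then t else 0)"
  define dB where "dB = (\<lambda>(e::'v set) v. if v = y2 then t else if v = z2 then t else 0)"
  have e1E: "e1 \<in> E1" unfolding e1_def complete3partite_def using p y1 z1 by blast
  have e2E: "e2 \<in> E2" unfolding e2_def complete3partite_def using p y2 z2 by blast
  have d1: "x1 \<noteq> y1" "x1 \<noteq> z1" "y1 \<noteq> z1" using z1 p y1 dj1 by auto
  have d2: "x2 \<noteq> y2" "x2 \<noteq> z2" "y2 \<noteq> z2" using z2 p y2 dj2 by auto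
  have spos: "s > 0" using rf by auto
  have std1: "std x1 = real a * s" "std y1 = real b * s" "std z1 = real c * s"
    using std_C std_A std_B z1 p y1 by auto
  have std2: "std x2 = real a * s" "std y2 = real b * s" "std z2 = real c * s"
    using std_C std_A std_B z2 p y2 by auto
  have pos: "t > 0" unfolding t_def using std_bounds by auto
  note D = okD1[OF ab bc] okD3[OF ab bc]
  have tle: "t \<le> s" unfolding t_def using D by simp
  have okQ: "tri_ok a b c t t t"
  proof -
    have "ok3 a b c t t t" unfolding ok3_def using pos rf by (auto simp: field_simps)
    then show ?thesis unfolding tri_ok_def by blast
  qed
  have qd: "(y1,y2) \<noteq> (z1,z2)" using d1 by auto
  let ?Q = "{(y1,y2),(z1,z2)}"
  show ?thesis
  proof (rule generic[where MA="{e1}" and MB="{e2}" and dA=dA and dB=dB and Q="?Q"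
       and PU="\<lambda>_. t" and PV="\<lambda>_. t" and PW="\<lambda>_. t"])
    show "{e1} \<subseteq> E1" "{e2} \<subseteq> E2" "finite ?Q" using e1E e2E by auto
    show "?Q \<subseteq> V1 \<times> V2" using y1 z1 y2 z2 by auto
    show "\<forall>q\<in>?Q. {u, fst q, snd q} \<in> E" using uE1 uE2 by simp
    show "\<forall>e\<in>{e1}. \<forall>x\<in>A1. \<forall>y\<in>B1. \<forall>z\<in>C1. e = {x, y, z} \<longrightarrow>
      tri_ok a b c (std x - dA e x) (std y - dA e y) (std z - dA e z)"
      by (rule adm_one[where d=dA]) (use p y1 z1 dj1 d1 std1 D e1_def t_def in \<open>auto simp: dA_def\<close>)
    show "\<forall>e\<in>{e2}. \<forall>x\<in>A2. \<forall>y\<in>B2. \<forall>z\<in>C2. e = {x, y, z} \<longrightarrow>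
      tri_ok a b c (std x - dB e x) (std y - dB e y) (std z - dB e z)"
      by (rule adm_one[where d=dB]) (use p y2 z2 dj2 d2 std2 D e2_def t_def in \<open>auto simp: dB_def\<close>)
    show "\<forall>e\<in>{e1}. \<forall>v\<in>e. 0 \<le> dA e v \<and> mm \<le> std v - dA e v"
      unfolding dA_def by (rule val_ok) (use pos D std1 d1 t_def in \<open>auto simp: e1_def\<close>)
    show "\<forall>e\<in>{e2}. \<forall>v\<in>e. 0 \<le> dB e v \<and> mm \<le> std v - dB e v"
      unfolding dB_def by (rule val_ok) (use pos D std2 d2 t_def in \<open>auto simp: e2_def\<close>)
    show "\<forall>q\<in>?Q. mm \<le> t \<and> t \<le> 1 \<and> mm \<le> t \<and> t \<le> 1 \<and> mm \<le> t \<and> t \<le> 1 \<and> tri_ok a b c t t t"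
      using okQ tle D t_def by auto
    show "\<forall>v\<in>V1. (\<Sum>q\<in>?Q. if fst q = v then t else 0) \<le> (\<Sum>e\<in>{e1}. if v \<in> e then dA e v else 0)"
      using pos qd d1 by (auto simp: e1_def dA_def)
    show "\<forall>v\<in>V2. (\<Sum>q\<in>?Q. if snd q = v then t else 0) \<le> (\<Sum>e\<in>{e2}. if v \<in> e then dB e v else 0)"
      using pos qd d2 by (auto simp: e2_def dB_def)
    show "(\<Sum>q\<in>?Q. t) \<le> 1" using qd tle D by simp
    show "s / real c \<le> (\<Sum>q\<in>?Q. t + t + t) - (\<Sum>e\<in>{e1}. \<Sum>v\<in>e. dA e v) - (\<Sum>e\<in>{e2}. \<Sum>v\<in>e. dB e v)"
    proof -
      have "(\<Sum>e\<in>{e1}. \<Sum>v\<in>e. dA e v) = 2 * t" using d1 by (simp add: e1_def dA_def sum3)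
      moreover have "(\<Sum>e\<in>{e2}. \<Sum>v\<in>e. dB e v) = 2 * t" using d2 by (simp add: e2_def dB_def sum3)
      moreover have "s / real c \<le> t" unfolding t_def using rf by (simp add: divide_right_mono)
      ultimately show ?thesis using qd pos by simp
    qed
  qed
qed

lemma config_D3:
  assumes ab: "a < b" and bc: "b = c" and y1: "y1 \<in> B1" and y2: "y2 \<in> B2" and uE1: "{u, y1, y2} \<in> E"
    and x1: "x1 \<in> A1" and z2: "z2 \<in> C2" and uE2: "{u, x1, z2} \<in> E"
  shows "GOAL a b c (insert u (V1 \<union> V2)) E"
proof -
  obtain z1 x2 where p: "z1 \<in> C1" "x2 \<in> A2" using ex_parts by blast
  define e1 where "e1 = {x1,y1,z1}"
  define e2 where "e2 = {x2,y2,z2}"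
  define dA where "dA = (\<lambda>(e::'v set) v. if v = x1 then mm else if v = y1 then s else if v = z1 then s else 0)"
  define dB where "dB = (\<lambda>(e::'v set) v. if v = y2 then s else if v = z2 then s else 0)"
  define PV where "PV = (\<lambda>q. if q = (x1,z2) then mm else s)"
  have e1E: "e1 \<in> E1" unfolding e1_def complete3partite_def using p y1 x1 by blast
  have e2E: "e2 \<in> E2" unfolding e2_def complete3partite_def using p y2 z2 by blast
  have d1: "x1 \<noteq> y1" "x1 \<noteq> z1" "y1 \<noteq> z1" using x1 p y1 dj1 by auto
  have d2: "x2 \<noteq> y2" "x2 \<noteq> z2" "y2 \<noteq> z2" using z2 p y2 dj2 by auto
  have spos: "s > 0" using rf by auto
  have std1: "std x1 = real a * s" "std y1 = real b * s" "std z1 = real c * s"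
    using std_C std_A std_B x1 p y1 by auto
  have std2: "std x2 = real a * s" "std y2 = real b * s" "std z2 = real c * s"
    using std_C std_A std_B z2 p y2 by auto
  have pos: "mm > 0" using std_bounds by auto
  note D = okD3[OF ab bc]
  have qd: "(y1,y2) \<noteq> (x1,z2)" "(x1,z2) \<noteq> (y1,y2)" using d1 by auto
  let ?Q = "{(y1,y2),(x1,z2)}"
  show ?thesis
  proof (rule generic[where MA="{e1}" and MB="{e2}" and dA=dA and dB=dB and Q="?Q"
       and PU="\<lambda>_. s" and PV=PV and PW="\<lambda>_. s"])
    show "{e1} \<subseteq> E1" "{e2} \<subseteq> E2" "finite ?Q" using e1E e2E by auto
    show "?Q \<subseteq> V1 \<times> V2" using y1 x1 y2 z2 by auto
    show "\<forall>q\<in>?Q. {u, fst q, snd q} \<in> E" using uE1 uE2 by simp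
    show "\<forall>e\<in>{e1}. \<forall>x\<in>A1. \<forall>y\<in>B1. \<forall>z\<in>C1. e = {x, y, z} \<longrightarrow>
      tri_ok a b c (std x - dA e x) (std y - dA e y) (std z - dA e z)"
      by (rule adm_one[where d=dA]) (use p y1 x1 dj1 d1 std1 D e1_def in \<open>auto simp: dA_def\<close>)
    show "\<forall>e\<in>{e2}. \<forall>x\<in>A2. \<forall>y\<in>B2. \<forall>z\<in>C2. e = {x, y, z} \<longrightarrow>
      tri_ok a b c (std x - dB e x) (std y - dB e y) (std z - dB e z)"
      by (rule adm_one[where d=dB]) (use p y2 z2 dj2 d2 std2 D e2_def in \<open>auto simp: dB_def\<close>)
    show "\<forall>e\<in>{e1}. \<forall>v\<in>e. 0 \<le> dA e v \<and> mm \<le> std v - dA e v"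
      unfolding dA_def by (rule val_ok) (use pos spos D std1 d1 in \<open>auto simp: e1_def\<close>)
    show "\<forall>e\<in>{e2}. \<forall>v\<in>e. 0 \<le> dB e v \<and> mm \<le> std v - dB e v"
      unfolding dB_def by (rule val_ok) (use pos spos D std2 d2 in \<open>auto simp: e2_def\<close>)
    show "\<forall>q\<in>?Q. mm \<le> s \<and> s \<le> 1 \<and> mm \<le> PV q \<and> PV q \<le> 1 \<and> mm \<le> s \<and> s \<le> 1 \<and> tri_ok a b c s (PV q) s"
      using D qd unfolding PV_def by auto
    show "\<forall>v\<in>V1. (\<Sum>q\<in>?Q. if fst q = v then PV q else 0) \<le> (\<Sum>e\<in>{e1}. if v \<in> e then dA e v else 0)"
      using pos spos qd d1 by (auto simp: e1_def dA_def PV_def)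
    show "\<forall>v\<in>V2. (\<Sum>q\<in>?Q. if snd q = v then s else 0) \<le> (\<Sum>e\<in>{e2}. if v \<in> e then dB e v else 0)"
      using pos spos qd d2 by (auto simp: e2_def dB_def)
    show "(\<Sum>q\<in>?Q. s) \<le> 1" using qd D by simp
    show "s / real c \<le> (\<Sum>q\<in>?Q. s + PV q + s) - (\<Sum>e\<in>{e1}. \<Sum>v\<in>e. dA e v) - (\<Sum>e\<in>{e2}. \<Sum>v\<in>e. dB e v)"
    proof -
      have "(\<Sum>e\<in>{e1}. \<Sum>v\<in>e. dA e v) = mm + 2 * s" using d1 by (simp add: e1_def dA_def sum3)
      moreover have "(\<Sum>e\<in>{e2}. \<Sum>v\<in>e. dB e v) = 2 * s" using d2 by (simp add: e2_def dB_def sum3)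
      moreover have "(\<Sum>q\<in>?Q. s + PV q + s) = 5 * s + mm" using qd d1 by (simp add: PV_def)
      moreover have "s / real c \<le> s" using rf spos by (simp add: divide_le_eq)
      ultimately show ?thesis by simp
    qed
  qed
qed

lemma config_D5:
  assumes ab: "a < b" and bc: "b = c" and y1: "y1 \<in> B1" and y2: "y2 \<in> B2" and uE1: "{u, y1, y2} \<in> E"
    and y1': "y1' \<in> B1" and z2: "z2 \<in> C2" and uE2: "{u, y1', z2} \<in> E"
  shows "GOAL a b c (insert u (V1 \<union> V2)) E"
proof -
  obtain x x2 where p: "x \<in> A1" "x2 \<in> A2" using ex_parts by blast
  obtain z z' where zz: "z \<in> C1" "z' \<in> C1" "z \<noteq> z'"
  proof -
    have "card C1 \<ge> 2" using cards abc by auto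
    then obtain S where "S \<subseteq> C1" "card S = 2" by (meson obtain_subset_with_card_n)
    then obtain z z' where "z \<noteq> z'" "S = {z, z'}" by (auto simp: card_2_iff)
    then show ?thesis using that \<open>S \<subseteq> C1\<close> by blast
  qed
  define e1 where "e1 = {x,y1,z}"
  define e1' where "e1' = {x,y1',z'}"
  define e2 where "e2 = {x2,y2,z2}"
  define dA where "dA = (\<lambda>e v. if e = e1 then (if v = y1 \<or> v = z then mm else 0)
      else if e = e1' then (if v = y1' \<or> v = z' then mm else 0) else 0)"
  define dB where "dB = (\<lambda>(e::'v set) v. if v = y2 then s else if v = z2 then s else 0)"
  have ne: "e1 \<noteq> e1'" unfolding e1_def e1'_def
    using part_eq[of x y1 z x y1' z' A1 B1 C1] dj1 p y1 y1' zz by blast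
  have e1E: "e1 \<in> E1" "e1' \<in> E1" unfolding e1_def e1'_def complete3partite_def using p y1 y1' zz by blast+
  have e2E: "e2 \<in> E2" unfolding e2_def complete3partite_def using p y2 z2 by blast
  have d1: "x \<noteq> y1" "x \<noteq> z" "y1 \<noteq> z" "x \<noteq> y1'" "x \<noteq> z'" "y1' \<noteq> z'" using p y1 y1' zz dj1 by auto
  have d2: "x2 \<noteq> y2" "x2 \<noteq> z2" "y2 \<noteq> z2" using z2 p y2 dj2 by auto
  have spos: "s > 0" using rf by auto
  have stdx: "std v = real a * s" if "v \<in> A1" for v using std_A that by auto
  have stdy: "std v = real b * s" if "v \<in> B1" for v using std_B that by auto
  have stdz: "std v = real c * s" if "v \<in> C1" for v using std_C that by auto
  have std2: "std x2 = real a * s" "std y2 = real b * s" "std z2 = real c * s"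
    using std_C std_A std_B z2 p y2 by auto
  have pos: "mm > 0" using std_bounds by auto
  note D = okD1[OF ab bc] okD3[OF ab bc]
  have qd: "(y1,y2) \<noteq> (y1',z2)" "(y1',z2) \<noteq> (y1,y2)" using d2 by auto
  let ?Q = "{(y1,y2),(y1',z2)}"
  show ?thesis
  proof (rule generic[where MA="{e1,e1'}" and MB="{e2}" and dA=dA and dB=dB and Q="?Q"
       and PU="\<lambda>_. s" and PV="\<lambda>_. mm" and PW="\<lambda>_. s"])
    show "{e1,e1'} \<subseteq> E1" "{e2} \<subseteq> E2" "finite ?Q" using e1E e2E by auto
    show "?Q \<subseteq> V1 \<times> V2" using y1 y1' y2 z2 by auto
    show "\<forall>q\<in>?Q. {u, fst q, snd q} \<in> E" using uE1 uE2 by simp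
    show "\<forall>e\<in>{e1,e1'}. \<forall>x\<in>A1. \<forall>y\<in>B1. \<forall>z\<in>C1. e = {x, y, z} \<longrightarrow>
      tri_ok a b c (std x - dA e x) (std y - dA e y) (std z - dA e z)"
    proof (rule adm_two)
      show "\<forall>e\<in>{e1}. \<forall>x\<in>A1. \<forall>y\<in>B1. \<forall>z\<in>C1. e = {x, y, z} \<longrightarrow>
          tri_ok a b c (std x - dA e x) (std y - dA e y) (std z - dA e z)"
        by (rule adm_one[where d=dA]) (use p y1 zz dj1 d1 D stdx stdy stdz e1_def in \<open>auto simp: dA_def\<close>)
      show "\<forall>e\<in>{e1'}. \<forall>x\<in>A1. \<forall>y\<in>B1. \<forall>z\<in>C1. e = {x, y, z} \<longrightarrow>
          tri_ok a b c (std x - dA e x) (std y - dA e y) (std z - dA e z)"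
        by (rule adm_one[where d=dA]) (use p y1' zz dj1 d1 ne D stdx stdy stdz e1'_def in \<open>auto simp: dA_def\<close>)
    qed
    show "\<forall>e\<in>{e2}. \<forall>x\<in>A2. \<forall>y\<in>B2. \<forall>z\<in>C2. e = {x, y, z} \<longrightarrow>
      tri_ok a b c (std x - dB e x) (std y - dB e y) (std z - dB e z)"
      by (rule adm_one[where d=dB]) (use p y2 z2 dj2 d2 std2 D e2_def in \<open>auto simp: dB_def\<close>)
    show "\<forall>e\<in>{e1,e1'}. \<forall>v\<in>e. 0 \<le> dA e v \<and> mm \<le> std v - dA e v"
    proof (intro ballI)
      fix e v assume e: "e \<in> {e1,e1'}" and v: "v \<in> e"
      show "0 \<le> dA e v \<and> mm \<le> std v - dA e v"
      proof (cases "dA e v = 0")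
        case True then show ?thesis using std_bounds(1)[of v] by simp
      next
        case False
        then have "(e = e1 \<and> (v = y1 \<or> v = z)) \<or> (e = e1' \<and> (v = y1' \<or> v = z'))" "dA e v = mm"
          using e ne unfolding dA_def by (auto split: if_splits)
        then show ?thesis using D pos stdy stdz y1 y1' zz by auto
      qed
    qed
    show "\<forall>e\<in>{e2}. \<forall>v\<in>e. 0 \<le> dB e v \<and> mm \<le> std v - dB e v"
      unfolding dB_def by (rule val_ok) (use pos spos D std2 d2 in \<open>auto simp: e2_def\<close>)
    show "\<forall>q\<in>?Q. mm \<le> s \<and> s \<le> 1 \<and> mm \<le> mm \<and> mm \<le> 1 \<and> mm \<le> s \<and> s \<le> 1 \<and> tri_ok a b c s mm s"
      using D by auto
    show "\<forall>v\<in>V1. (\<Sum>q\<in>?Q. if fst q = v then mm else 0) \<le> (\<Sum>e\<in>{e1,e1'}. if v \<in> e then dA e v else 0)"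
    proof
      fix v assume "v \<in> V1"
      have ss: "(\<Sum>e\<in>{e1,e1'}. if v \<in> e then dA e v else 0) = (if v \<in> e1 then dA e1 v else 0) + (if v \<in> e1' then dA e1' v else 0)"
        using ne by simp
      have "dA e1 v = (if v = y1 \<or> v = z then mm else 0)" "dA e1' v = (if v = y1' \<or> v = z' then mm else 0)"
        using ne by (auto simp: dA_def)
      moreover have "y1 \<in> e1" "y1' \<in> e1'" "z \<in> e1" "z' \<in> e1'" by (simp_all add: e1_def e1'_def)
      moreover have "(\<Sum>q\<in>?Q. if fst q = v then mm else 0) = (if y1 = v then mm else 0) + (if y1' = v then mm else 0)"
        using qd by simp
      ultimately show "(\<Sum>q\<in>?Q. if fst q = v then mm else 0) \<le> (\<Sum>e\<in>{e1,e1'}. if v \<in> e then dA e v else 0)"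
        unfolding ss using pos rf by (auto simp: field_simps)
    qed
    show "\<forall>v\<in>V2. (\<Sum>q\<in>?Q. if snd q = v then s else 0) \<le> (\<Sum>e\<in>{e2}. if v \<in> e then dB e v else 0)"
      using pos spos qd d2 by (auto simp: e2_def dB_def)
    show "(\<Sum>q\<in>?Q. s) \<le> 1" using qd D by simp
    show "s / real c \<le> (\<Sum>q\<in>?Q. s + mm + s) - (\<Sum>e\<in>{e1,e1'}. \<Sum>v\<in>e. dA e v) - (\<Sum>e\<in>{e2}. \<Sum>v\<in>e. dB e v)"
    proof -
      have "(\<Sum>v\<in>e1. dA e1 v) = 2 * mm" using d1 by (simp add: e1_def dA_def sum3)
      moreover have "(\<Sum>v\<in>e1'. dA e1' v) = 2 * mm" using d1 ne by (simp add: e1'_def dA_def sum3)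
      ultimately have s1: "(\<Sum>e\<in>{e1,e1'}. \<Sum>v\<in>e. dA e v) = 4 * mm" using ne by simp
      have s2: "(\<Sum>e\<in>{e2}. \<Sum>v\<in>e. dB e v) = 2 * s" using d2 by (simp add: e2_def dB_def sum3)
      have s3: "(\<Sum>q\<in>?Q. s + mm + s) = 4 * s + 2 * mm" using qd by simp
      have "(1 + 2 * real a) * s \<le> (2 * real c) * s" using rf by (intro smul) linarith
      then have "s / real c + 2 * mm \<le> 2 * s" using rf by (simp add: field_simps)
      then show ?thesis unfolding s1 s2 s3 by simp
    qed
  qed
qed

end



definition Pset :: "'v \<Rightarrow> 'v set set \<Rightarrow> 'v set \<Rightarrow> 'v set \<Rightarrow> ('v \<times> 'v) set" where
  "Pset u E X Y = {p \<in> X \<times> Y. {u, fst p, snd p} \<in> E}"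

definition nbk :: "('v \<times> 'v) set \<Rightarrow> 'v set \<Rightarrow> 'v set \<Rightarrow> nat" where
  "nbk P X Y = card {p \<in> P. fst p \<in> X \<and> snd p \<in> Y}"

lemma card_split3:
  assumes "finite P" "\<forall>p\<in>P. f p \<in> X1 \<union> X2 \<union> X3" "X1 \<inter> X2 = {}" "X1 \<inter> X3 = {}" "X2 \<inter> X3 = {}"
  shows "card P = card {p\<in>P. f p \<in> X1} + card {p\<in>P. f p \<in> X2} + card {p\<in>P. f p \<in> X3}"
proof -
  let ?S1 = "{p\<in>P. f p \<in> X1}" and ?S2 = "{p\<in>P. f p \<in> X2}" and ?S3 = "{p\<in>P. f p \<in> X3}"
  have fs: "finite ?S1" "finite ?S2" "finite ?S3" using assms(1) by auto
  have eq: "P = (?S1 \<union> ?S2) \<union> ?S3" using assms(2) by auto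
  have d1: "(?S1 \<union> ?S2) \<inter> ?S3 = {}" using assms(4,5) by auto
  have d2: "?S1 \<inter> ?S2 = {}" using assms(3) by auto
  have "card P = card (?S1 \<union> ?S2) + card ?S3"
    by (subst eq, rule card_Un_disjoint) (use fs d1 in auto)
  also have "card (?S1 \<union> ?S2) = card ?S1 + card ?S2"
    by (rule card_Un_disjoint) (use fs d2 in auto)
  finally show ?thesis .
qed

lemma nbk_le: "finite X \<Longrightarrow> finite Y \<Longrightarrow> nbk P X Y \<le> card X * card Y"
proof -
  assume f: "finite X" "finite Y"
  have "{p \<in> P. fst p \<in> X \<and> snd p \<in> Y} \<subseteq> X \<times> Y" by auto
  then have "card {p \<in> P. fst p \<in> X \<and> snd p \<in> Y} \<le> card (X \<times> Y)" using f by (intro card_mono) auto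
  then show ?thesis unfolding nbk_def by (simp add: card_cartesian_product)
qed

lemma nbk_zero: "\<not> (\<exists>v\<in>X. \<exists>w\<in>Y. (v,w) \<in> P) \<Longrightarrow> nbk P X Y = 0"
  unfolding nbk_def by (auto simp: card_eq_0_iff)

context L2s begin

abbreviation "PP \<equiv> Pset u E V1 V2"

lemma finPP: "finite PP"
proof -
  have "PP \<subseteq> V1 \<times> V2" unfolding Pset_def by auto
  then show ?thesis using finV1 finV2 finite_subset by blast
qed

lemma PP_iff: "(v,w) \<in> PP \<longleftrightarrow> v \<in> V1 \<and> w \<in> V2 \<and> {u,v,w} \<in> E"
  unfolding Pset_def by auto

lemma block_row: "card {p \<in> PP. fst p \<in> X} = nbk PP X A2 + nbk PP X B2 + nbk PP X C2"
proof -
  have "card {p \<in> PP. fst p \<in> X} = card {p\<in>{p \<in> PP. fst p \<in> X}. snd p \<in> A2} + card {p\<in>{p \<in> PP. fst p \<in> X}. snd p \<in> B2}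
      + card {p\<in>{p \<in> PP. fst p \<in> X}. snd p \<in> C2}"
  proof (rule card_split3)
    show "finite {p \<in> PP. fst p \<in> X}" using finPP by simp
  qed (use dj2 in \<open>auto simp: Pset_def\<close>)
  moreover have "\<And>Y. {p\<in>{p \<in> PP. fst p \<in> X}. snd p \<in> Y} = {p \<in> PP. fst p \<in> X \<and> snd p \<in> Y}" by auto
  ultimately show ?thesis unfolding nbk_def by simp
qed

lemma block9: "card PP = nbk PP A1 A2 + nbk PP A1 B2 + nbk PP A1 C2 + nbk PP B1 A2 + nbk PP B1 B2 + nbk PP B1 C2
   + nbk PP C1 A2 + nbk PP C1 B2 + nbk PP C1 C2"
proof -
  have "card PP = card {p\<in>PP. fst p \<in> A1} + card {p\<in>PP. fst p \<in> B1} + card {p\<in>PP. fst p \<in> C1}"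
    by (rule card_split3) (use finPP dj1 in \<open>auto simp: Pset_def\<close>)
  then show ?thesis using block_row by simp
qed

lemma nb_bounds: "nbk PP A1 A2 \<le> a * a" "nbk PP A1 B2 \<le> a * b" "nbk PP A1 C2 \<le> a * c"
  "nbk PP B1 A2 \<le> a * b" "nbk PP B1 B2 \<le> b * b" "nbk PP B1 C2 \<le> b * c"
  "nbk PP C1 A2 \<le> a * c" "nbk PP C1 B2 \<le> b * c" "nbk PP C1 C2 \<le> c * c"
  using nbk_le[of _ _ PP] fin cards by (metis mult.commute)+

lemma no_pair: "\<not> (\<exists>v\<in>X. \<exists>w\<in>Y. {u,v,w} \<in> E) \<Longrightarrow> nbk PP X Y = 0"
  by (rule nbk_zero) (auto simp: Pset_def)

lemma tri_comm: "{u,v,w} = {u,w,v}" by auto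

lemma swapAB1: "a = b \<Longrightarrow> L2s a b c B1 A1 C1 A2 B2 C2 u E"
  using fin cards dj1 dj2 dj12 un abc Esub E12 c3p_swap12[of B1 A1 C1]
  by unfold_locales (auto simp: Un_ac)

lemma swapAB2: "a = b \<Longrightarrow> L2s a b c A1 B1 C1 B2 A2 C2 u E"
  using fin cards dj1 dj2 dj12 un abc Esub E12 c3p_swap12[of B2 A2 C2]
  by unfold_locales (auto simp: Un_ac)

lemma swapBC1: "b = c \<Longrightarrow> L2s a b c A1 C1 B1 A2 B2 C2 u E"
  using fin cards dj1 dj2 dj12 un abc Esub E12 c3p_swap23[of A1 C1 B1]
  by unfold_locales (auto simp: Un_ac)

lemma swapBC2: "b = c \<Longrightarrow> L2s a b c A1 B1 C1 A2 C2 B2 u E"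
  using fin cards dj1 dj2 dj12 un abc Esub E12 c3p_swap23[of A2 C2 B2]
  by unfold_locales (auto simp: Un_ac)

lemma PP_swap: "Pset u E V2 V1 = (\<lambda>(x,y). (y,x)) ` PP"
  unfolding Pset_def by (auto simp: tri_comm image_iff)

lemma card_PP_swap: "card (Pset u E V2 V1) = card PP"
  unfolding PP_swap by (rule card_image) (auto simp: inj_on_def)

lemma case_iii_BB:
  assumes ab: "a < b" and bc: "b = c" and y1: "y1 \<in> B1" and y2: "y2 \<in> B2" and uE: "{u,y1,y2} \<in> E"
    and cardP: "card PP > (a+b)^2"
  shows "GOAL a b c (insert u (V1 \<union> V2)) E"
proof -
  interpret S: L2s a b c A2 B2 C2 A1 B1 C1 u E by (rule swap)
  have gs: "GOAL a b c (insert u (V2 \<union> V1)) E \<Longrightarrow> ?thesis" by (simp add: Un_commute)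
  have uE': "{u,y2,y1} \<in> E" using uE tri_comm by metis
  show ?thesis
  proof (cases "\<exists>v\<in>B1. \<exists>w\<in>C2. {u,v,w} \<in> E")
    case True
    then obtain y1' z2 where "y1' \<in> B1" "z2 \<in> C2" "{u,y1',z2} \<in> E" by blast
    then show ?thesis using config_D5[OF ab bc y1 y2 uE] by blast
  next
    case F1: False
    show ?thesis
    proof (cases "\<exists>v\<in>C1. \<exists>w\<in>B2. {u,v,w} \<in> E")
      case True
      then obtain z1 y2' where "z1 \<in> C1" "y2' \<in> B2" "{u,z1,y2'} \<in> E" by blast
      then have "{u,y2',z1} \<in> E" using tri_comm by metis
      then show ?thesis using S.config_D5[OF ab bc y2 y1 uE'] \<open>z1 \<in> C1\<close> \<open>y2' \<in> B2\<close> gs by blast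
    next
      case F2: False
      show ?thesis
      proof (cases "\<exists>v\<in>C1. \<exists>w\<in>C2. {u,v,w} \<in> E")
        case True
        then obtain z1 z2 where "z1 \<in> C1" "z2 \<in> C2" "{u,z1,z2} \<in> E" by blast
        then show ?thesis using config_D1[OF ab bc y1 y2 uE] by blast
      next
        case F3: False
        show ?thesis
        proof (cases "\<exists>v\<in>A1. \<exists>w\<in>C2. {u,v,w} \<in> E")
          case True
          then obtain x1 z2 where "x1 \<in> A1" "z2 \<in> C2" "{u,x1,z2} \<in> E" by blast
          then show ?thesis using config_D3[OF ab bc y1 y2 uE] by blast
        next
          case F4: False
          show ?thesis
          proof (cases "\<exists>v\<in>C1. \<exists>w\<in>A2. {u,v,w} \<in> E")
            case True
            then obtain z1 x2 where "z1 \<in> C1" "x2 \<in> A2" "{u,z1,x2} \<in> E" by blast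
            then have "{u,x2,z1} \<in> E" using tri_comm by metis
            then show ?thesis using S.config_D3[OF ab bc y2 y1 uE'] \<open>z1 \<in> C1\<close> \<open>x2 \<in> A2\<close> gs by blast
          next
            case F5: False
            have z: "nbk PP B1 C2 = 0" "nbk PP C1 B2 = 0" "nbk PP C1 C2 = 0" "nbk PP A1 C2 = 0" "nbk PP C1 A2 = 0"
              using no_pair F1 F2 F3 F4 F5 by auto
            have "card PP \<le> a * a + a * b + a * b + b * b" using block9 nb_bounds z by linarith
            also have "\<dots> = (a+b)^2" by (simp add: power2_eq_square algebra_simps)
            finally show ?thesis using cardP by simp
          qed
        qed
      qed
    qed
  qed
qed

lemma case_iii:
  assumes ab: "a < b" and bc: "b = c"
    and cardP: "card PP > a^2 + 2*a*(b+c)" "card PP > (a+b)^2"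
  shows "GOAL a b c (insert u (V1 \<union> V2)) E"
proof -
  have "\<exists>v\<in>B1 \<union> C1. \<exists>w\<in>B2 \<union> C2. {u,v,w} \<in> E"
  proof (rule ccontr)
    assume F: "\<not> ?thesis"
    have z: "nbk PP B1 B2 = 0" "nbk PP B1 C2 = 0" "nbk PP C1 B2 = 0" "nbk PP C1 C2 = 0"
      using no_pair F by auto
    have "card PP \<le> a * a + a * b + a * c + a * b + a * c" using block9 nb_bounds z by linarith
    also have "\<dots> = a^2 + 2*a*(b+c)" by (simp add: power2_eq_square algebra_simps)
    finally show False using cardP by simp
  qed
  then obtain v w where vw: "v \<in> B1 \<union> C1" "w \<in> B2 \<union> C2" "{u,v,w} \<in> E" by blast
  have P1: "Pset u E (A1 \<union> C1 \<union> B1) V2 = PP" by (simp add: Un_ac)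
  have P2: "Pset u E V1 (A2 \<union> C2 \<union> B2) = PP" by (simp add: Un_ac)
  have P3: "Pset u E (A1 \<union> C1 \<union> B1) (A2 \<union> C2 \<union> B2) = PP" by (simp add: Un_ac)
  consider "v \<in> B1" "w \<in> B2" | "v \<in> B1" "w \<in> C2" | "v \<in> C1" "w \<in> B2" | "v \<in> C1" "w \<in> C2" using vw by blast
  then show ?thesis
  proof cases
    case 1 then show ?thesis using case_iii_BB[OF ab bc _ _ vw(3) cardP(2)] by blast
  next
    case 2
    interpret T: L2s a b c A1 B1 C1 A2 C2 B2 u E by (rule swapBC2[OF bc])
    have "GOAL a b c (insert u (V1 \<union> (A2 \<union> C2 \<union> B2))) E"
      using T.case_iii_BB[OF ab bc 2 vw(3)] cardP(2) P2 by simp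
    then show ?thesis by (simp add: Un_ac)
  next
    case 3
    interpret T: L2s a b c A1 C1 B1 A2 B2 C2 u E by (rule swapBC1[OF bc])
    have "GOAL a b c (insert u ((A1 \<union> C1 \<union> B1) \<union> V2)) E"
      using T.case_iii_BB[OF ab bc 3 vw(3)] cardP(2) P1 by simp
    then show ?thesis by (simp add: Un_ac)
  next
    case 4
    interpret T0: L2s a b c A1 C1 B1 A2 B2 C2 u E by (rule swapBC1[OF bc])
    interpret T: L2s a b c A1 C1 B1 A2 C2 B2 u E by (rule T0.swapBC2[OF bc])
    have "GOAL a b c (insert u ((A1 \<union> C1 \<union> B1) \<union> (A2 \<union> C2 \<union> B2))) E"
      using T.case_iii_BB[OF ab bc 4 vw(3)] cardP(2) P3 by simp
    then show ?thesis by (simp add: Un_ac)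
  qed
qed

lemma case_i:
  assumes ab: "a < b" and bc: "b < c"
    and cardP: "card PP > a^2 + 2*a*(b+c)" "card PP > (a+b)^2"
  shows "GOAL a b c (insert u (V1 \<union> V2)) E"
proof -
  interpret S: L2s a b c A2 B2 C2 A1 B1 C1 u E by (rule swap)
  have gs: "GOAL a b c (insert u (V2 \<union> V1)) E \<Longrightarrow> ?thesis" by (simp add: Un_commute)
  show ?thesis
  proof (cases "\<exists>v\<in>C1. \<exists>w\<in>C2. {u,v,w} \<in> E")
    case True
    then obtain z1 z2 where "z1 \<in> C1" "z2 \<in> C2" "{u,z1,z2} \<in> E" by blast
    then show ?thesis using config_CC[OF bc] by blast
  next
    case F1: False
    show ?thesis
    proof (cases "\<exists>v\<in>C1. \<exists>w\<in>B2. {u,v,w} \<in> E")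
      case True
      then obtain z1 y2 where "z1 \<in> C1" "y2 \<in> B2" "{u,z1,y2} \<in> E" by blast
      then show ?thesis using config_CB[OF ab bc] by blast
    next
      case F2: False
      show ?thesis
      proof (cases "\<exists>v\<in>B1. \<exists>w\<in>C2. {u,v,w} \<in> E")
        case True
        then obtain y1 z2 where "y1 \<in> B1" "z2 \<in> C2" "{u,y1,z2} \<in> E" by blast
        then have "{u,z2,y1} \<in> E" using tri_comm by metis
        then show ?thesis using S.config_CB[OF ab bc] \<open>y1 \<in> B1\<close> \<open>z2 \<in> C2\<close> gs by blast
      next
        case F3: False
        have "\<exists>v\<in>B1. \<exists>w\<in>B2. {u,v,w} \<in> E"
        proof (rule ccontr)
          assume F: "\<not> ?thesis"
          have z: "nbk PP B1 B2 = 0" "nbk PP B1 C2 = 0" "nbk PP C1 B2 = 0" "nbk PP C1 C2 = 0"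
            using no_pair F F1 F2 F3 by auto
          have "card PP \<le> a * a + a * b + a * c + a * b + a * c" using block9 nb_bounds z by linarith
          also have "\<dots> = a^2 + 2*a*(b+c)" by (simp add: power2_eq_square algebra_simps)
          finally show False using cardP by simp
        qed
        then obtain y1 y2 where yy: "y1 \<in> B1" "y2 \<in> B2" "{u,y1,y2} \<in> E" by blast
        have yy': "{u,y2,y1} \<in> E" using yy tri_comm by metis
        show ?thesis
        proof (cases "\<exists>v\<in>C1. \<exists>w\<in>A2. {u,v,w} \<in> E")
          case True
          then obtain z1 x2 where "z1 \<in> C1" "x2 \<in> A2" "{u,z1,x2} \<in> E" by blast
          then show ?thesis using config_BBCA[OF ab bc yy] by blast
        next
          case F4: False
          show ?thesis
          proof (cases "\<exists>v\<in>A1. \<exists>w\<in>C2. {u,v,w} \<in> E")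
            case True
            then obtain x1 z2 where "x1 \<in> A1" "z2 \<in> C2" "{u,x1,z2} \<in> E" by blast
            then have "{u,z2,x1} \<in> E" using tri_comm by metis
            then show ?thesis using S.config_BBCA[OF ab bc yy(2) yy(1) yy'] \<open>x1 \<in> A1\<close> \<open>z2 \<in> C2\<close> gs by blast
          next
            case F5: False
            have z: "nbk PP B1 C2 = 0" "nbk PP C1 B2 = 0" "nbk PP C1 C2 = 0" "nbk PP A1 C2 = 0" "nbk PP C1 A2 = 0"
              using no_pair F1 F2 F3 F4 F5 by auto
            have "card PP \<le> a * a + a * b + a * b + b * b" using block9 nb_bounds z by linarith
            also have "\<dots> = (a+b)^2" by (simp add: power2_eq_square algebra_simps)
            finally show ?thesis using cardP by simp
          qed
        qed
      qed
    qed
  qed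
qed

lemma PMcase:
  assumes ab: "a = b" and bc: "b < c"
    and n1: "\<not> (\<exists>v\<in>C1. \<exists>w\<in>C2. {u,v,w} \<in> E)" and n2: "\<not> (\<exists>v\<in>A1. \<exists>w\<in>C2. {u,v,w} \<in> E)"
    and n3: "\<not> (\<exists>v\<in>C1. \<exists>w\<in>A2. {u,v,w} \<in> E)"
    and cardP: "card PP > a^2 + 2*a*(b+c)"
  shows "GOAL a b c (insert u (V1 \<union> V2)) E"
proof -
  have eqs: "a * b = a * a" "b * b = a * a" "b * c = a * c" using ab by simp_all
  have bnd: "a^2 + 2*a*(b+c) = a * a + a * a + a * a + a * c + a * c" using ab by (simp add: power2_eq_square algebra_simps)
  have aac: "a * a \<le> a * c" using abc by simp
  have z0: "nbk PP C1 C2 = 0" "nbk PP A1 C2 = 0" "nbk PP C1 A2 = 0" using no_pair n1 n2 n3 by auto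
  have "\<exists>v\<in>A1. \<exists>w\<in>A2. {u,v,w} \<in> E"
  proof (rule ccontr)
    assume F: "\<not> ?thesis"
    have "nbk PP A1 A2 = 0" using no_pair F by auto
    then have "card PP \<le> a * b + a * b + b * b + b * c + b * c" using block9 nb_bounds z0 by linarith
    then show False using cardP eqs bnd by linarith
  qed
  then obtain x1 x2 where xx: "x1 \<in> A1" "x2 \<in> A2" "{u,x1,x2} \<in> E" by blast
  have "\<exists>v\<in>B1. \<exists>w\<in>C2. {u,v,w} \<in> E"
  proof (rule ccontr)
    assume F: "\<not> ?thesis"
    have "nbk PP B1 C2 = 0" using no_pair F by auto
    then have "card PP \<le> a * a + a * b + a * b + b * b + b * c" using block9 nb_bounds z0 by linarith
    then show False using cardP eqs bnd aac by linarith
  qed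
  then obtain y1 z2 where yz: "y1 \<in> B1" "z2 \<in> C2" "{u,y1,z2} \<in> E" by blast
  have "\<exists>v\<in>C1. \<exists>w\<in>B2. {u,v,w} \<in> E"
  proof (rule ccontr)
    assume F: "\<not> ?thesis"
    have "nbk PP C1 B2 = 0" using no_pair F by auto
    then have "card PP \<le> a * a + a * b + a * b + b * b + b * c" using block9 nb_bounds z0 by linarith
    then show False using cardP eqs bnd aac by linarith
  qed
  then obtain z1 y2 where zy: "z1 \<in> C1" "y2 \<in> B2" "{u,z1,y2} \<in> E" by blast
  show ?thesis using config_PM[OF ab bc xx yz zy] .
qed

lemma case_ii:
  assumes ab: "a = b" and bc: "b < c"
    and cardP: "card PP > a^2 + 2*a*(b+c)"
  shows "GOAL a b c (insert u (V1 \<union> V2)) E"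
proof -
  interpret S: L2s a b c A2 B2 C2 A1 B1 C1 u E by (rule swap)
  have gs: "GOAL a b c (insert u (V2 \<union> V1)) E \<Longrightarrow> ?thesis" by (simp add: Un_commute)
  show ?thesis
  proof (cases "\<exists>v\<in>C1. \<exists>w\<in>C2. {u,v,w} \<in> E")
    case True
    then obtain z1 z2 where "z1 \<in> C1" "z2 \<in> C2" "{u,z1,z2} \<in> E" by blast
    then show ?thesis using config_CC[OF bc] by blast
  next
    case n1: False
    show ?thesis
    proof (cases "(\<exists>v\<in>A1. \<exists>w\<in>C2. {u,v,w} \<in> E) \<and> (\<exists>v\<in>B1. \<exists>w\<in>C2. {u,v,w} \<in> E)")
      case True
      then obtain x1 z2 y1 z2' where "x1 \<in> A1" "z2 \<in> C2" "{u,x1,z2} \<in> E" "y1 \<in> B1" "z2' \<in> C2" "{u,y1,z2'} \<in> E"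
        by blast
      then show ?thesis using config_XZYZ[OF ab bc] by blast
    next
      case n2: False
      show ?thesis
      proof (cases "(\<exists>v\<in>C1. \<exists>w\<in>A2. {u,v,w} \<in> E) \<and> (\<exists>v\<in>C1. \<exists>w\<in>B2. {u,v,w} \<in> E)")
        case True
        then obtain x2 z1 y2 z1' where h: "x2 \<in> A2" "z1 \<in> C1" "{u,z1,x2} \<in> E" "y2 \<in> B2" "z1' \<in> C1" "{u,z1',y2} \<in> E"
          by blast
        then have "{u,x2,z1} \<in> E" "{u,y2,z1'} \<in> E" using tri_comm by metis+
        then show ?thesis using S.config_XZYZ[OF ab bc h(1) h(4) h(2) h(5)] gs by blast
      next
        case n3: False
        have P1: "Pset u E (B1 \<union> A1 \<union> C1) V2 = PP" by (simp add: Un_ac)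
        have P2: "Pset u E V1 (B2 \<union> A2 \<union> C2) = PP" by (simp add: Un_ac)
        have P3: "Pset u E (B1 \<union> A1 \<union> C1) (B2 \<union> A2 \<union> C2) = PP" by (simp add: Un_ac)
        consider "\<not> (\<exists>v\<in>A1. \<exists>w\<in>C2. {u,v,w} \<in> E)" "\<not> (\<exists>v\<in>C1. \<exists>w\<in>A2. {u,v,w} \<in> E)"
          | "\<not> (\<exists>v\<in>B1. \<exists>w\<in>C2. {u,v,w} \<in> E)" "\<not> (\<exists>v\<in>C1. \<exists>w\<in>A2. {u,v,w} \<in> E)"
          | "\<not> (\<exists>v\<in>A1. \<exists>w\<in>C2. {u,v,w} \<in> E)" "\<not> (\<exists>v\<in>C1. \<exists>w\<in>B2. {u,v,w} \<in> E)"
          | "\<not> (\<exists>v\<in>B1. \<exists>w\<in>C2. {u,v,w} \<in> E)" "\<not> (\<exists>v\<in>C1. \<exists>w\<in>B2. {u,v,w} \<in> E)"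
          using n2 n3 by blast
        then show ?thesis
        proof cases
          case 1 then show ?thesis using PMcase[OF ab bc n1 _ _ cardP] by blast
        next
          case 2
          interpret T: L2s a b c B1 A1 C1 A2 B2 C2 u E by (rule swapAB1[OF ab])
          have "GOAL a b c (insert u ((B1 \<union> A1 \<union> C1) \<union> V2)) E"
            using T.PMcase[OF ab bc n1 2] cardP P1 by simp
          then show ?thesis by (simp add: Un_ac)
        next
          case 3
          interpret T: L2s a b c A1 B1 C1 B2 A2 C2 u E by (rule swapAB2[OF ab])
          have "GOAL a b c (insert u (V1 \<union> (B2 \<union> A2 \<union> C2))) E"
            using T.PMcase[OF ab bc n1 3] cardP P2 by simp
          then show ?thesis by (simp add: Un_ac)
        next
          case 4
          interpret T0: L2s a b c B1 A1 C1 A2 B2 C2 u E by (rule swapAB1[OF ab])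
          interpret T: L2s a b c B1 A1 C1 B2 A2 C2 u E by (rule T0.swapAB2[OF ab])
          have "GOAL a b c (insert u ((B1 \<union> A1 \<union> C1) \<union> (B2 \<union> A2 \<union> C2))) E"
            using T.PMcase[OF ab bc n1 4] cardP P3 by simp
          then show ?thesis by (simp add: Un_ac)
        qed
      qed
    qed
  qed
qed

lemma main_loc:
  assumes cardP: "card PP > a^2 + 2*a*(b+c)" "card PP > (a+b)^2"
  shows "GOAL a b c (insert u (V1 \<union> V2)) E"
proof -
  consider "a < b" "b < c" | "a = b" "b < c" | "a < b" "b = c" using abc by linarith
  then show ?thesis
  proof cases
    case 1 then show ?thesis using case_i cardP by blast
  next
    case 2 then show ?thesis using case_ii cardP by blast
  next
    case 3 then show ?thesis using case_iii cardP by blast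
  qed
qed

lemma cardPP_eq: "card {e \<in> E. \<exists>v\<in>V1. \<exists>w\<in>V2. e = {u, v, w}} = card PP"
proof -
  have inj: "inj_on (\<lambda>p. {u, fst p, snd p}) PP"
  proof (rule inj_onI)
    fix p q assume "p \<in> PP" "q \<in> PP" "{u, fst p, snd p} = {u, fst q, snd q}"
    then have "fst p = fst q \<and> snd p = snd q"
      using triple_inj[where X=V1 and Y=V2] dj12 un unfolding Pset_def by auto
    then show "p = q" by (simp add: prod_eq_iff)
  qed
  have "{e \<in> E. \<exists>v\<in>V1. \<exists>w\<in>V2. e = {u, v, w}} = (\<lambda>p. {u, fst p, snd p}) ` PP"
  proof (intro equalityI subsetI)
    fix e assume "e \<in> {e \<in> E. \<exists>v\<in>V1. \<exists>w\<in>V2. e = {u, v, w}}"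
    then obtain v w where h: "e \<in> E" "v \<in> V1" "w \<in> V2" "e = {u,v,w}" by blast
    have "(v,w) \<in> PP" using h unfolding Pset_def by simp
    then show "e \<in> (\<lambda>p. {u, fst p, snd p}) ` PP" using h(4) by (intro image_eqI[where x="(v,w)"]) auto
  next
    fix e assume "e \<in> (\<lambda>p. {u, fst p, snd p}) ` PP"
    then obtain p where "p \<in> PP" "e = {u, fst p, snd p}" by blast
    then have "e \<in> E" "fst p \<in> V1" "snd p \<in> V2" "e = {u, fst p, snd p}" unfolding Pset_def by auto
    then show "e \<in> {e \<in> E. \<exists>v\<in>V1. \<exists>w\<in>V2. e = {u, v, w}}" by blast
  qed
  then show ?thesis using card_image[OF inj] by simp
qed

end




theorem proposition4p7:
  fixes a b c :: nat and u :: 'v and V1 V2 :: "'v set" and E1 E2 E :: "'v set set"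
  assumes "1 \<le> a" and "a \<le> b" and "b \<le> c" and "a < c"
    and "is_copy_K a b c V1 E1" and "is_copy_K a b c V2 E2"
    and "V1 \<inter> V2 = {}" and "u \<notin> V1 \<union> V2"
    and "in_L2 a b c V1 E1 V2 E2 u E"
  shows "\<exists>h. frac_hom_tiling a b c (insert u (V1 \<union> V2)) E h \<and>
             tiling_weight (insert u (V1 \<union> V2)) E h
               \<ge> 2 * real (a + b + c) + 1 / (real a * real b * real c ^ 2) \<and>
             tiling_hmin (insert u (V1 \<union> V2)) E h \<ge> 1 / (real b * real c ^ 2)"
proof -
  obtain A1 B1 C1 where K1: "finite A1" "finite B1" "finite C1" "card A1 = a" "card B1 = b" "card C1 = c"
    "A1 \<inter> B1 = {}" "A1 \<inter> C1 = {}" "B1 \<inter> C1 = {}" "V1 = A1 \<union> B1 \<union> C1" "E1 = complete3partite A1 B1 C1"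
    using assms(5) unfolding is_copy_K_def by blast
  obtain A2 B2 C2 where K2: "finite A2" "finite B2" "finite C2" "card A2 = a" "card B2 = b" "card C2 = c"
    "A2 \<inter> B2 = {}" "A2 \<inter> C2 = {}" "B2 \<inter> C2 = {}" "V2 = A2 \<union> B2 \<union> C2" "E2 = complete3partite A2 B2 C2"
    using assms(6) unfolding is_copy_K_def by blast
  have L: "E \<subseteq> {e. e \<subseteq> insert u (V1 \<union> V2) \<and> card e = 3}" "E1 \<union> E2 \<subseteq> E"
    "card {e \<in> E. \<exists>v\<in>V1. \<exists>w\<in>V2. e = {u, v, w}} \<ge> max (a^2 + 2*a*(b+c)) ((a+b)^2) + 1"
    using assms(9) unfolding in_L2_def by auto
  interpret L2s a b c A1 B1 C1 A2 B2 C2 u E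
    using K1 K2 assms(1-4,7,8) L(1,2) by unfold_locales auto
  have "card PP \<ge> max (a^2 + 2*a*(b+c)) ((a+b)^2) + 1"
    using L(3) cardPP_eq K1(10) K2(10) by simp
  then have "card PP > a^2 + 2*a*(b+c)" "card PP > (a+b)^2" by auto
  then have "GOAL a b c (insert u (V1 \<union> V2)) E" using main_loc K1(10) K2(10) by simp
  then show ?thesis unfolding GOAL_def .
qed


end
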